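(* Let $R$ be a finitely generated $\mathbb{C}$-algebra which is an integral domain. Then $R$ is rigid if and only if $R[X,Y]/(XY)$ (with $X,Y$ indeterminates over $R$) is rigid.
   Context: A derivation of a $\mathbb{C}$-algebra $A$ is a $\mathbb{C}$-linear map $D:A\to A$ satisfying the Leibniz rule; it is locally nilpotent (an LND) if for every $a\in A$ there is $n$ with $D^n(a)=0$. A ring is rigid if its only locally nilpotent derivation is the zero derivation. *)

theory Defs
  imports "HOL-Algebra.Algebra" Complex_Main
begin

definition complex_ring :: "complex ring" where
  "complex_ring = \<lparr>carrier = UNIV, monoid.mult = (*), one = 1, ring.zero = 0, ring.add = (+)\<rparr>"

definition C_algebra :: "('a, 'b) ring_scheme \<Rightarrow> (complex \<Rightarrow> 'a) \<Rightarrow> bool" where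
  "C_algebra R \<phi> \<longleftrightarrow> cring R \<and> \<phi> \<in> ring_hom complex_ring R"

definition fin_gen_C_algebra :: "('a, 'b) ring_scheme \<Rightarrow> (complex \<Rightarrow> 'a) \<Rightarrow> bool" where
  "fin_gen_C_algebra R \<phi> \<longleftrightarrow>
     (\<exists>S. finite S \<and> S \<subseteq> carrier R \<and> carrier R = generate_ring R (range \<phi> \<union> S))"

definition C_derivation :: "('a, 'b) ring_scheme \<Rightarrow> (complex \<Rightarrow> 'a) \<Rightarrow> ('a \<Rightarrow> 'a) \<Rightarrow> bool" where
  "C_derivation R \<phi> D \<longleftrightarrow>
     D \<in> carrier R \<rightarrow> carrier R \<and>
     (\<forall>a\<in>carrier R. \<forall>b\<in>carrier R. D (a \<oplus>\<^bsub>R\<^esub> b) = D a \<oplus>\<^bsub>R\<^esub> D b) \<and>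
     (\<forall>c. \<forall>a\<in>carrier R. D (\<phi> c \<otimes>\<^bsub>R\<^esub> a) = \<phi> c \<otimes>\<^bsub>R\<^esub> D a) \<and>
     (\<forall>a\<in>carrier R. \<forall>b\<in>carrier R.
        D (a \<otimes>\<^bsub>R\<^esub> b) = (a \<otimes>\<^bsub>R\<^esub> D b) \<oplus>\<^bsub>R\<^esub> (D a \<otimes>\<^bsub>R\<^esub> b))"

definition LND :: "('a, 'b) ring_scheme \<Rightarrow> (complex \<Rightarrow> 'a) \<Rightarrow> ('a \<Rightarrow> 'a) \<Rightarrow> bool" where
  "LND R \<phi> D \<longleftrightarrow> C_derivation R \<phi> D \<and> (\<forall>a\<in>carrier R. \<exists>n. (D ^^ n) a = \<zero>\<^bsub>R\<^esub>)"

definition rigid :: "('a, 'b) ring_scheme \<Rightarrow> (complex \<Rightarrow> 'a) \<Rightarrow> bool" where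
  "rigid R \<phi> \<longleftrightarrow> (\<forall>D. LND R \<phi> D \<longrightarrow> (\<forall>a\<in>carrier R. D a = \<zero>\<^bsub>R\<^esub>))"

text \<open>R[X,Y] realised as (R[X])[Y] (HOL-Algebra univariate polynomials), the ideal (XY), and R[X,Y]/(XY).\<close>
definition polyXY :: "('a, 'b) ring_scheme \<Rightarrow> (nat \<Rightarrow> 'a, nat \<Rightarrow> nat \<Rightarrow> 'a) up_ring" where
  "polyXY R = UP (UP R)"

definition varX :: "('a, 'b) ring_scheme \<Rightarrow> nat \<Rightarrow> nat \<Rightarrow> 'a" where
  "varX R = monom (UP (UP R)) (monom (UP R) \<one>\<^bsub>R\<^esub> 1) 0"

definition varY :: "('a, 'b) ring_scheme \<Rightarrow> nat \<Rightarrow> nat \<Rightarrow> 'a" where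
  "varY R = monom (UP (UP R)) \<one>\<^bsub>UP R\<^esub> 1"

definition constXY :: "('a, 'b) ring_scheme \<Rightarrow> 'a \<Rightarrow> nat \<Rightarrow> nat \<Rightarrow> 'a" where
  "constXY R a = monom (UP (UP R)) (monom (UP R) a 0) 0"

definition XY_ideal :: "('a, 'b) ring_scheme \<Rightarrow> (nat \<Rightarrow> nat \<Rightarrow> 'a) set" where
  "XY_ideal R = genideal (polyXY R) {varX R \<otimes>\<^bsub>polyXY R\<^esub> varY R}"

definition XY_quot :: "('a, 'b) ring_scheme \<Rightarrow> (nat \<Rightarrow> nat \<Rightarrow> 'a) set ring" where
  "XY_quot R = polyXY R Quot XY_ideal R"

definition XY_quot_hom :: "('a, 'b) ring_scheme \<Rightarrow> (complex \<Rightarrow> 'a) \<Rightarrow> complex \<Rightarrow> (nat \<Rightarrow> nat \<Rightarrow> 'a) set" where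
  "XY_quot_hom R \<phi> c = a_r_coset (polyXY R) (XY_ideal R) (constXY R (\<phi> c))"

end

theory Submission
  imports Defs
begin


locale deriv = cring R for R (structure) +
  fixes D
  assumes D_cl: "a \<in> carrier R \<Longrightarrow> D a \<in> carrier R"
    and D_add: "\<lbrakk>a \<in> carrier R; b \<in> carrier R\<rbrakk> \<Longrightarrow> D (a \<oplus> b) = D a \<oplus> D b"
    and D_mult: "\<lbrakk>a \<in> carrier R; b \<in> carrier R\<rbrakk> \<Longrightarrow> D (a \<otimes> b) = a \<otimes> D b \<oplus> D a \<otimes> b"
begin

lemma D_zero[simp]: "D \<zero> = \<zero>"
proof -
  have "D \<zero> \<oplus> D \<zero> = D \<zero> \<oplus> \<zero>" using D_add[of \<zero> \<zero>] D_cl[of \<zero>] by simp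
  thus ?thesis using D_cl[of \<zero>] by (meson add.l_cancel zero_closed)
qed

lemma D_one[simp]: "D \<one> = \<zero>"
proof -
  have "D \<one> \<oplus> D \<one> = D \<one> \<oplus> \<zero>" using D_mult[of \<one> \<one>] D_cl[of \<one>] by simp
  thus ?thesis using D_cl[of \<one>] by (meson add.l_cancel zero_closed one_closed)
qed

lemma D_neg: "a \<in> carrier R \<Longrightarrow> D (\<ominus> a) = \<ominus> D a"
proof -
  assume a: "a \<in> carrier R"
  have "D a \<oplus> D (\<ominus> a) = \<zero>" using D_add[of a "\<ominus> a"] a by (simp add: r_neg)
  thus ?thesis using a D_cl
    by (metis a_inv_closed add.inv_closed add.m_comm minus_equality)
qed

lemma D_minus: "a \<in> carrier R \<Longrightarrow> b \<in> carrier R \<Longrightarrow> D (a \<ominus> b) = D a \<ominus> D b"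
  by (simp add: a_minus_def D_add D_neg)

lemma Dpow_cl: "a \<in> carrier R \<Longrightarrow> (D ^^ n) a \<in> carrier R"
  by (induction n) (auto simp: D_cl)

lemma Dpow_zero[simp]: "(D ^^ n) \<zero> = \<zero>"
  by (induction n) auto

lemma Dpow_mono: "(D ^^ n) a = \<zero> \<Longrightarrow> n \<le> m \<Longrightarrow> (D ^^ m) a = \<zero>"
proof -
  assume "(D ^^ n) a = \<zero>" "n \<le> m"
  then obtain k where "m = k + n" by (metis add.commute le_add_diff_inverse)
  thus ?thesis using \<open>(D ^^ n) a = \<zero>\<close> by (simp add: funpow_add)
qed

lemma D_addpow: "a \<in> carrier R \<Longrightarrow> D (add_pow R (k::nat) a) = add_pow R k (D a)"
  by (induction k) (auto simp: D_add D_cl)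

lemma D_finsum: "f \<in> UNIV \<rightarrow> carrier R \<Longrightarrow> D (\<Oplus>i\<in>{..(n::nat)}. f i) = (\<Oplus>i\<in>{..n}. D (f i))"
proof (induction n)
  case 0 thus ?case using D_cl by (subst (1 2) finsum_0) auto
next
  case (Suc n)
  have cl: "(\<lambda>i. D (f i)) \<in> UNIV \<rightarrow> carrier R" using Suc.prems D_cl by auto
  show ?case using Suc cl by (simp add: finsum_Suc D_add Pi_def finsum_closed)
qed

lemma Dpow_add: "a \<in> carrier R \<Longrightarrow> b \<in> carrier R \<Longrightarrow> (D ^^ n) (a \<oplus> b) = (D ^^ n) a \<oplus> (D ^^ n) b"
  by (induction n) (auto simp: D_add Dpow_cl)

lemma addpow_cl: "x \<in> carrier R \<Longrightarrow> add_pow R (k::nat) x \<in> carrier R"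
  by simp

lemma Leibniz_n:
  assumes a: "a \<in> carrier R" and b: "b \<in> carrier R"
  shows "(D ^^ n) (a \<otimes> b) = (\<Oplus>i\<in>{..n}. add_pow R (n choose i) ((D ^^ i) a \<otimes> (D ^^ (n - i)) b))"
proof (induction n)
  case 0
  show ?case using a b by (subst finsum_0) auto
next
  case (Suc n)
  define g where "g i = (D ^^ i) a \<otimes> (D ^^ (Suc n - i)) b" for i
  have gc: "g i \<in> carrier R" for i using a b by (simp add: g_def Dpow_cl)
  have fc: "(\<lambda>i. add_pow R (n choose i) ((D ^^ i) a \<otimes> (D ^^ (n - i)) b)) \<in> UNIV \<rightarrow> carrier R"
    using a b by (simp add: Dpow_cl)
  define P1 where "P1 = (\<Oplus>i\<in>{..n}. add_pow R (n choose i) (g i))"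
  define P2 where "P2 = (\<Oplus>i\<in>{..n}. add_pow R (n choose i) (g (Suc i)))"
  define Q where "Q = (\<Oplus>i\<in>{..n}. add_pow R (n choose (Suc i)) (g (Suc i)))"
  have cP1: "P1 \<in> carrier R" and cP2: "P2 \<in> carrier R" and cQ: "Q \<in> carrier R"
    unfolding P1_def P2_def Q_def using gc by (auto intro!: finsum_closed)
  have "(D ^^ Suc n) (a \<otimes> b) = D (\<Oplus>i\<in>{..n}. add_pow R (n choose i) ((D ^^ i) a \<otimes> (D ^^ (n - i)) b))"
    using Suc by simp
  also have "\<dots> = (\<Oplus>i\<in>{..n}. D (add_pow R (n choose i) ((D ^^ i) a \<otimes> (D ^^ (n - i)) b)))"
    using D_finsum[OF fc] by simp
  also have "\<dots> = (\<Oplus>i\<in>{..n}. add_pow R (n choose i) (g i) \<oplus> add_pow R (n choose i) (g (Suc i)))"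
  proof -
    have pw: "D (add_pow R (n choose i) ((D ^^ i) a \<otimes> (D ^^ (n - i)) b)) = add_pow R (n choose i) (g i) \<oplus> add_pow R (n choose i) (g (Suc i))"
      if i: "i \<le> n" for i
    proof -
      have e1: "D ((D ^^ (n - i)) b) = (D ^^ (Suc n - i)) b" using i by (simp add: Suc_diff_le)
      have "D (add_pow R (n choose i) ((D ^^ i) a \<otimes> (D ^^ (n - i)) b))
          = add_pow R (n choose i) ((D ^^ i) a \<otimes> D ((D ^^ (n - i)) b) \<oplus> D ((D ^^ i) a) \<otimes> (D ^^ (n - i)) b)"
        using a b by (simp add: D_addpow D_mult Dpow_cl)
      also have "\<dots> = add_pow R (n choose i) (g i \<oplus> g (Suc i))"
        using e1 by (simp add: g_def)
      also have "\<dots> = add_pow R (n choose i) (g i) \<oplus> add_pow R (n choose i) (g (Suc i))"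
        using gc by (simp add: add.nat_pow_distrib)
      finally show ?thesis .
    qed
    show ?thesis by (rule finsum_cong) (use gc pw in auto)
  qed
  also have "\<dots> = P1 \<oplus> P2" unfolding P1_def P2_def
    by (rule finsum_addf) (use gc in auto)
  finally have L: "(D ^^ Suc n) (a \<otimes> b) = P1 \<oplus> P2" .
  have "P1 = (\<Oplus>i\<in>{..Suc n}. add_pow R (n choose i) (g i))"
    unfolding P1_def using gc by (subst finsum_Suc) (auto simp: binomial_eq_0)
  also have "\<dots> = add_pow R (n choose 0) (g 0) \<oplus> Q"
    unfolding Q_def using gc by (subst finsum_Suc2) (auto intro: a_comm finsum_closed)
  finally have P1e: "P1 = g 0 \<oplus> Q" using gc by simp
  have "(\<Oplus>i\<in>{..Suc n}. add_pow R (Suc n choose i) (g i))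
      = add_pow R (Suc n choose 0) (g 0) \<oplus> (\<Oplus>i\<in>{..n}. add_pow R (Suc n choose Suc i) (g (Suc i)))"
    using gc by (subst finsum_Suc2) (auto intro: a_comm finsum_closed)
  also have "(\<Oplus>i\<in>{..n}. add_pow R (Suc n choose Suc i) (g (Suc i)))
     = (\<Oplus>i\<in>{..n}. add_pow R (n choose i) (g (Suc i)) \<oplus> add_pow R (n choose Suc i) (g (Suc i)))"
    by (rule finsum_cong) (use gc in \<open>auto simp: add.nat_pow_mult\<close>)
  also have "\<dots> = P2 \<oplus> Q" unfolding P2_def Q_def
    by (rule finsum_addf) (use gc in auto)
  finally have "(\<Oplus>i\<in>{..Suc n}. add_pow R (Suc n choose i) (g i)) = g 0 \<oplus> (P2 \<oplus> Q)"
    using gc by simp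
  also have "\<dots> = P1 \<oplus> P2" using P1e cP2 cQ gc by (simp add: a_ac)
  finally show ?case using L by (simp add: g_def)
qed

end


locale deriv_dom = deriv + domain R +
  assumes char0: "\<And>k a. 0 < k \<Longrightarrow> a \<in> carrier R \<Longrightarrow> a \<noteq> \<zero> \<Longrightarrow> add_pow R (k::nat) a \<noteq> \<zero>"
    and lnd: "\<And>a. a \<in> carrier R \<Longrightarrow> \<exists>n. (D ^^ n) a = \<zero>"
begin

lemma top_ex:
  assumes a: "a \<in> carrier R" "a \<noteq> \<zero>"
  shows "\<exists>i. (D ^^ i) a \<noteq> \<zero> \<and> (D ^^ Suc i) a = \<zero>"
proof -
  obtain n where n: "(D ^^ n) a = \<zero>" using lnd a by blast
  define m where "m = (LEAST n. (D ^^ n) a = \<zero>)"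
  have m: "(D ^^ m) a = \<zero>" unfolding m_def by (rule LeastI[of _ n]) (rule n)
  have m0: "m \<noteq> 0" using m a by (cases m) auto
  then obtain i where mi: "m = Suc i" by (cases m) auto
  have "(D ^^ i) a \<noteq> \<zero>"
  proof
    assume "(D ^^ i) a = \<zero>"
    hence "m \<le> i" unfolding m_def by (rule Least_le)
    thus False using mi by simp
  qed
  thus ?thesis using m mi by blast
qed

lemma prod_top:
  assumes a: "a \<in> carrier R" and b: "b \<in> carrier R"
    and ai: "(D ^^ i) a \<noteq> \<zero>" "(D ^^ Suc i) a = \<zero>"
    and bj: "(D ^^ j) b \<noteq> \<zero>" "(D ^^ Suc j) b = \<zero>"
  shows "(D ^^ (i + j)) (a \<otimes> b) \<noteq> \<zero>"
proof -
  define f where "f k = add_pow R ((i + j) choose k) ((D ^^ k) a \<otimes> (D ^^ (i + j - k)) b)" for k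
  have fc: "f k \<in> carrier R" for k using a b by (simp add: f_def Dpow_cl)
  have "(D ^^ (i + j)) (a \<otimes> b) = (\<Oplus>k\<in>{..i+j}. f k)"
    unfolding f_def by (rule Leibniz_n[OF a b])
  also have "\<dots> = (\<Oplus>k\<in>{..i+j}. if i = k then f k else \<zero>)"
  proof -
    have pw: "f k = (if i = k then f k else \<zero>)" for k
    proof (cases "i = k")
      case False
      show ?thesis
      proof (cases "i < k")
        case True
        hence "(D ^^ k) a = \<zero>" using Dpow_mono[OF ai(2), of k] by simp
        thus ?thesis using False b by (simp add: f_def Dpow_cl)
      next
        case c2: False
        hence "Suc j \<le> i + j - k" using False by auto
        hence "(D ^^ (i + j - k)) b = \<zero>" using Dpow_mono[OF bj(2)] by blast
        thus ?thesis using False a by (simp add: f_def Dpow_cl)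
      qed
    qed simp
    show ?thesis by (rule finsum_cong) (use fc pw in auto)
  qed
  also have "\<dots> = f i" by (rule finsum_singleton) (use fc in auto)
  finally have e: "(D ^^ (i + j)) (a \<otimes> b) = f i" .
  have "(D ^^ i) a \<otimes> (D ^^ j) b \<noteq> \<zero>" using ai bj a b by (simp add: integral_iff Dpow_cl)
  moreover have "0 < (i + j) choose i" by simp
  ultimately have "f i \<noteq> \<zero>" unfolding f_def using char0 a b by (simp add: Dpow_cl)
  thus ?thesis using e by simp
qed

lemma eigen_zero:
  assumes x: "x \<in> carrier R" and g: "g \<in> carrier R" and e: "D x = x \<otimes> g"
  shows "D x = \<zero>"
proof (rule ccontr)
  assume ne: "D x \<noteq> \<zero>"
  hence x0: "x \<noteq> \<zero>" and g0: "g \<noteq> \<zero>" using e x g by auto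
  obtain i where i: "(D ^^ i) x \<noteq> \<zero>" "(D ^^ Suc i) x = \<zero>" using top_ex[OF x x0] by blast
  obtain j where j: "(D ^^ j) g \<noteq> \<zero>" "(D ^^ Suc j) g = \<zero>" using top_ex[OF g g0] by blast
  have "(D ^^ (i + j)) (x \<otimes> g) \<noteq> \<zero>" by (rule prod_top[OF x g i j])
  moreover have "(D ^^ (i + j)) (x \<otimes> g) = (D ^^ Suc (i + j)) x"
    using e by (simp add: funpow_Suc_right del: funpow.simps)
  moreover have "(D ^^ Suc (i + j)) x = \<zero>" using Dpow_mono[OF i(2), of "Suc (i + j)"] by simp
  ultimately show False by simp
qed

end



abbreviation UPc where "UPc \<equiv> up_ring.coeff"
abbreviation UPm where "UPm \<equiv> up_ring.monom"

context UP_cring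
begin

lemma carrier_P_up: "carrier P = up R" unfolding P_def UP_def by simp

lemma coeff_P_app: "p \<in> carrier P \<Longrightarrow> UPc P p n = p n" unfolding P_def UP_def by simp

lemma coeff_mult0: "p \<in> carrier P \<Longrightarrow> q \<in> carrier P \<Longrightarrow> UPc P (p \<otimes>\<^bsub>P\<^esub> q) 0 = UPc P p 0 \<otimes> UPc P q 0"
proof -
  assume p: "p \<in> carrier P" and q: "q \<in> carrier P"
  have "UPc P (p \<otimes>\<^bsub>P\<^esub> q) 0 = (\<Oplus>i\<in>{..0}. UPc P p i \<otimes> UPc P q (0 - i))"
    by (rule coeff_mult[OF p q])
  also have "\<dots> = UPc P p 0 \<otimes> UPc P q (0 - 0)"
    by (rule R.finsum_0) (use p q in auto)
  finally show ?thesis by simp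
qed

lemma ev0_hom: "(\<lambda>p. UPc P p 0) \<in> ring_hom P R"
  by (rule ring_hom_memI) (simp_all add: coeff_mult0)

definition shiftp :: "(nat \<Rightarrow> 'a) \<Rightarrow> nat \<Rightarrow> 'a" where
  "shiftp p = (\<lambda>n. UPc P p (Suc n))"

lemma shiftp_closed: "p \<in> carrier P \<Longrightarrow> shiftp p \<in> carrier P"
proof -
  assume p: "p \<in> carrier P"
  then obtain n where n: "bound \<zero> n p" using carrier_P_up by auto
  have "bound \<zero> n (shiftp p)"
  proof
    fix m assume "n < m"
    hence "p (Suc m) = \<zero>" using n unfolding bound_def by auto
    thus "shiftp p m = \<zero>" using p by (simp add: shiftp_def coeff_P_app)
  qed
  moreover have "\<And>k. shiftp p k \<in> carrier R" using p by (simp add: shiftp_def)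
  ultimately have "shiftp p \<in> up R" by (intro mem_upI) auto
  thus ?thesis by (simp add: carrier_P_up)
qed

lemma coeff_shiftp: "p \<in> carrier P \<Longrightarrow> UPc P (shiftp p) n = UPc P p (Suc n)"
  using shiftp_closed by (simp add: coeff_P_app shiftp_def)

lemma coeff_X_mult: "q \<in> carrier P \<Longrightarrow> UPc P (UPm P \<one> 1 \<otimes>\<^bsub>P\<^esub> q) (Suc n) = UPc P q n"
proof -
  assume q: "q \<in> carrier P"
  have "UPc P (UPm P \<one> 1 \<otimes>\<^bsub>P\<^esub> q) (n + 1) = \<one> \<otimes> UPc P q n"
    by (rule coeff_monom_mult) (use q in simp_all)
  thus ?thesis using q by (simp del: coeff_mult)
qed

lemma coeff_X_mult0: "q \<in> carrier P \<Longrightarrow> UPc P (UPm P \<one> 1 \<otimes>\<^bsub>P\<^esub> q) 0 = \<zero>"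
  by (simp add: coeff_mult0)

lemma shiftp_eq: "p \<in> carrier P \<Longrightarrow> UPc P p 0 = \<zero> \<Longrightarrow> p = UPm P \<one> 1 \<otimes>\<^bsub>P\<^esub> shiftp p"
proof -
  assume p: "p \<in> carrier P" and p0: "UPc P p 0 = \<zero>"
  show ?thesis
  proof (rule up_eqI)
    fix n show "UPc P p n = UPc P (UPm P \<one> 1 \<otimes>\<^bsub>P\<^esub> shiftp p) n"
    proof (cases n)
      case 0
      thus ?thesis using p0 coeff_X_mult0[OF shiftp_closed[OF p]] by simp
    next
      case (Suc m)
      thus ?thesis using coeff_X_mult[OF shiftp_closed[OF p], of m] coeff_shiftp[OF p, of m] by simp
    qed
  qed (use p shiftp_closed[OF p] in auto)
qed

end

context UP_domain
begin

lemma divisible_all_zero: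
  assumes q: "q \<in> carrier P" and dv: "\<And>n. \<exists>h\<in>carrier P. q = UPm P \<one> n \<otimes>\<^bsub>P\<^esub> h"
  shows "q = \<zero>\<^bsub>P\<^esub>"
proof (rule ccontr)
  assume q0: "q \<noteq> \<zero>\<^bsub>P\<^esub>"
  obtain h where h: "h \<in> carrier P" "q = UPm P \<one> (Suc (deg R q)) \<otimes>\<^bsub>P\<^esub> h" using dv by blast
  have h0: "h \<noteq> \<zero>\<^bsub>P\<^esub>" using h q0 by auto
  have m0: "UPm P \<one> (Suc (deg R q)) \<noteq> \<zero>\<^bsub>P\<^esub>"
  proof
    assume "UPm P \<one> (Suc (deg R q)) = \<zero>\<^bsub>P\<^esub>"
    hence "UPc P (UPm P \<one> (Suc (deg R q))) (Suc (deg R q)) = UPc P \<zero>\<^bsub>P\<^esub> (Suc (deg R q))" by simp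
    thus False by simp
  qed
  have "deg R q = deg R (UPm P \<one> (Suc (deg R q))) + deg R h"
    using h h0 m0 deg_mult[of "UPm P \<one> (Suc (deg R q))" h] by simp
  also have "\<dots> = Suc (deg R q) + deg R h" by simp
  finally have "deg R q = Suc (deg R q) + deg R h" .
  thus False by simp
qed

end



definition goodE :: "('a, 'b) ring_scheme \<Rightarrow> (complex \<Rightarrow> 'a) \<Rightarrow> ((nat \<Rightarrow> 'a) \<Rightarrow> (nat \<Rightarrow> 'a)) \<Rightarrow> bool" where
  "goodE R \<phi> E \<longleftrightarrow> deriv (UP R) E \<and>
     (\<forall>c. \<forall>f\<in>carrier (UP R). E (UPm (UP R) (\<phi> c) 0 \<otimes>\<^bsub>UP R\<^esub> f) = UPm (UP R) (\<phi> c) 0 \<otimes>\<^bsub>UP R\<^esub> E f) \<and>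
     (\<forall>f\<in>carrier (UP R). \<exists>n. (E ^^ n) f = \<zero>\<^bsub>UP R\<^esub>) \<and>
     E (UPm (UP R) \<one>\<^bsub>R\<^esub> 1) = \<zero>\<^bsub>UP R\<^esub>"

context UP_domain
begin

lemma domP: "domain P" using UP_domain by simp

lemma X_closed: "UPm P \<one> 1 \<in> carrier P" by simp

lemma monom1_nz: "UPm P \<one> n \<noteq> \<zero>\<^bsub>P\<^esub>"
proof
  assume "UPm P \<one> n = \<zero>\<^bsub>P\<^esub>"
  hence "UPc P (UPm P \<one> n) n = UPc P \<zero>\<^bsub>P\<^esub> n" by simp
  thus False by simp
qed

lemma X_cancel: "u \<in> carrier P \<Longrightarrow> v \<in> carrier P \<Longrightarrow> UPm P \<one> 1 \<otimes>\<^bsub>P\<^esub> u = UPm P \<one> 1 \<otimes>\<^bsub>P\<^esub> v \<Longrightarrow> u = v"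
  using domain.m_lcancel[OF domP, of "UPm P \<one> 1" u v] monom1_nz[of 1] by simp

lemma monom1_cancel: "u \<in> carrier P \<Longrightarrow> UPm P \<one> n \<otimes>\<^bsub>P\<^esub> u = \<zero>\<^bsub>P\<^esub> \<Longrightarrow> u = \<zero>\<^bsub>P\<^esub>"
  using domain.integral[OF domP, of "UPm P \<one> n" u] monom1_nz[of n] by auto

lemma monom1_Suc: "UPm P \<one> (Suc n) = UPm P \<one> 1 \<otimes>\<^bsub>P\<^esub> UPm P \<one> n"
  using monom_mult[of \<one> \<one> 1 n] by simp

lemma goodE_step:
  assumes phi: "\<phi> \<in> ring_hom complex_ring R" and rig: "rigid R \<phi>" and gE: "goodE R \<phi> E"
  shows "\<exists>E'. goodE R \<phi> E' \<and> (\<forall>f\<in>carrier P. E f = UPm P \<one> 1 \<otimes>\<^bsub>P\<^esub> E' f)"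
proof -
  let ?X = "UPm P \<one> 1"
  have dE: "deriv P E" and linE: "\<And>c f. f \<in> carrier P \<Longrightarrow> E (UPm P (\<phi> c) 0 \<otimes>\<^bsub>P\<^esub> f) = UPm P (\<phi> c) 0 \<otimes>\<^bsub>P\<^esub> E f"
    and lndE: "\<And>f. f \<in> carrier P \<Longrightarrow> \<exists>n. (E ^^ n) f = \<zero>\<^bsub>P\<^esub>" and EX: "E ?X = \<zero>\<^bsub>P\<^esub>"
    using gE unfolding goodE_def P_def by auto
  interpret E: deriv P E by (rule dE)
  have phic: "\<phi> c \<in> carrier R" for c using phi unfolding ring_hom_def complex_ring_def by auto
  have EXm: "E (?X \<otimes>\<^bsub>P\<^esub> h) = ?X \<otimes>\<^bsub>P\<^esub> E h" if h: "h \<in> carrier P" for h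
    using E.D_mult[OF X_closed h] EX h E.D_cl by simp
  define \<delta> where "\<delta> r = UPc P (E (UPm P r 0)) 0" for r
  have c0E: "UPc P (E f) 0 = \<zero>" if f: "f \<in> carrier P" and f0: "UPc P f 0 = \<zero>" for f
  proof -
    have "E f = E (?X \<otimes>\<^bsub>P\<^esub> shiftp f)" using shiftp_eq[OF f f0] by simp
    also have "\<dots> = ?X \<otimes>\<^bsub>P\<^esub> E (shiftp f)" by (rule EXm[OF shiftp_closed[OF f]])
    finally show ?thesis using coeff_X_mult0[OF E.D_cl[OF shiftp_closed[OF f]]] by simp
  qed
  have key: "UPc P (E f) 0 = \<delta> (UPc P f 0)" if f: "f \<in> carrier P" for f
  proof -
    define c where "c = UPc P f 0"
    have cc: "c \<in> carrier R" using f by (simp add: c_def)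
    define g where "g = f \<ominus>\<^bsub>P\<^esub> UPm P c 0"
    have gc: "g \<in> carrier P" using f cc by (simp add: g_def)
    have g0: "UPc P g 0 = \<zero>" using f cc by (simp add: g_def c_def)
    have fe: "f = UPm P c 0 \<oplus>\<^bsub>P\<^esub> g" using f cc unfolding g_def
      by (simp add: a_minus_def P.a_ac P.r_neg)
    have "UPc P (E f) 0 = UPc P (E (UPm P c 0) \<oplus>\<^bsub>P\<^esub> E g) 0"
      using fe E.D_add[of "UPm P c 0" g] cc gc by simp
    also have "\<dots> = \<delta> c" using c0E[OF gc g0] cc gc E.D_cl by (simp add: \<delta>_def)
    finally show ?thesis by (simp add: c_def)
  qed
  have \<delta>c: "\<delta> r \<in> carrier R" if "r \<in> carrier R" for r using that E.D_cl by (simp add: \<delta>_def)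
  have \<delta>pow: "(\<delta> ^^ n) (UPc P f 0) = UPc P ((E ^^ n) f) 0" if f: "f \<in> carrier P" for f n
  proof (induction n)
    case 0 show ?case by simp
  next
    case (Suc n)
    have "(\<delta> ^^ Suc n) (UPc P f 0) = \<delta> (UPc P ((E ^^ n) f) 0)" using Suc by simp
    also have "\<dots> = UPc P (E ((E ^^ n) f)) 0" using key[OF E.Dpow_cl[OF f, of n]] by simp
    finally show ?case by simp
  qed
  have lnd\<delta>: "LND R \<phi> \<delta>"
    unfolding LND_def C_derivation_def
  proof (intro conjI ballI allI)
    show "\<delta> \<in> carrier R \<rightarrow> carrier R" using \<delta>c by auto
  next
    fix a b assume a: "a \<in> carrier R" and b: "b \<in> carrier R"
    show "\<delta> (a \<oplus> b) = \<delta> a \<oplus> \<delta> b"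
      using a b E.D_add[of "UPm P a 0" "UPm P b 0"] E.D_cl by (simp add: \<delta>_def)
    have "UPm P (a \<otimes> b) 0 = UPm P a 0 \<otimes>\<^bsub>P\<^esub> UPm P b 0" using a b monom_mult[of a b 0 0] by simp
    thus "\<delta> (a \<otimes> b) = a \<otimes> \<delta> b \<oplus> \<delta> a \<otimes> b"
      using a b E.D_mult[of "UPm P a 0" "UPm P b 0"] E.D_cl by (simp add: \<delta>_def coeff_mult0)
  next
    fix c a assume a: "a \<in> carrier R"
    have "UPm P (\<phi> c \<otimes> a) 0 = UPm P (\<phi> c) 0 \<otimes>\<^bsub>P\<^esub> UPm P a 0" using a phic monom_mult[of "\<phi> c" a 0 0] by simp
    thus "\<delta> (\<phi> c \<otimes> a) = \<phi> c \<otimes> \<delta> a"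
      using a phic linE[of "UPm P a 0" c] E.D_cl by (simp add: \<delta>_def coeff_mult0)
  next
    fix a assume a: "a \<in> carrier R"
    obtain n where n: "(E ^^ n) (UPm P a 0) = \<zero>\<^bsub>P\<^esub>" using lndE[of "UPm P a 0"] a by auto
    have "(\<delta> ^^ n) a = (\<delta> ^^ n) (UPc P (UPm P a 0) 0)" using a by simp
    also have "\<dots> = \<zero>" using \<delta>pow[of "UPm P a 0" n] n a by simp
    finally show "\<exists>n. (\<delta> ^^ n) a = \<zero>" by blast
  qed
  have \<delta>0: "\<delta> a = \<zero>" if "a \<in> carrier R" for a using rig lnd\<delta> that unfolding rigid_def by blast
  have E0: "UPc P (E f) 0 = \<zero>" if f: "f \<in> carrier P" for f
    using key[OF f] \<delta>0 f by simp
  define E' where "E' f = shiftp (E f)" for f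
  have E'c: "E' f \<in> carrier P" if "f \<in> carrier P" for f
    unfolding E'_def using shiftp_closed E.D_cl that by blast
  have EE': "E f = ?X \<otimes>\<^bsub>P\<^esub> E' f" if f: "f \<in> carrier P" for f
    unfolding E'_def using shiftp_eq[OF E.D_cl[OF f] E0[OF f]] .
  have Xc: "?X \<in> carrier P" by simp
  interpret E': deriv P E'
  proof
    fix a assume a: "a \<in> carrier P" show "E' a \<in> carrier P" by (rule E'c[OF a])
  next
    fix a b assume a: "a \<in> carrier P" and b: "b \<in> carrier P"
    show "E' (a \<oplus>\<^bsub>P\<^esub> b) = E' a \<oplus>\<^bsub>P\<^esub> E' b"
    proof (rule X_cancel)
      have "?X \<otimes>\<^bsub>P\<^esub> E' (a \<oplus>\<^bsub>P\<^esub> b) = E a \<oplus>\<^bsub>P\<^esub> E b" using EE' E.D_add a b by simp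
      also have "\<dots> = ?X \<otimes>\<^bsub>P\<^esub> (E' a \<oplus>\<^bsub>P\<^esub> E' b)" using EE' a b E'c Xc by (simp add: P.r_distr)
      finally show "?X \<otimes>\<^bsub>P\<^esub> E' (a \<oplus>\<^bsub>P\<^esub> b) = ?X \<otimes>\<^bsub>P\<^esub> (E' a \<oplus>\<^bsub>P\<^esub> E' b)" .
    qed (use a b E'c in auto)
    show "E' (a \<otimes>\<^bsub>P\<^esub> b) = a \<otimes>\<^bsub>P\<^esub> E' b \<oplus>\<^bsub>P\<^esub> E' a \<otimes>\<^bsub>P\<^esub> b"
    proof (rule X_cancel)
      have "?X \<otimes>\<^bsub>P\<^esub> E' (a \<otimes>\<^bsub>P\<^esub> b) = a \<otimes>\<^bsub>P\<^esub> E b \<oplus>\<^bsub>P\<^esub> E a \<otimes>\<^bsub>P\<^esub> b" using EE' E.D_mult a b by simp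
      also have "\<dots> = a \<otimes>\<^bsub>P\<^esub> (?X \<otimes>\<^bsub>P\<^esub> E' b) \<oplus>\<^bsub>P\<^esub> (?X \<otimes>\<^bsub>P\<^esub> E' a) \<otimes>\<^bsub>P\<^esub> b" using EE' a b by simp
      also have "\<dots> = ?X \<otimes>\<^bsub>P\<^esub> (a \<otimes>\<^bsub>P\<^esub> E' b \<oplus>\<^bsub>P\<^esub> E' a \<otimes>\<^bsub>P\<^esub> b)"
        using a b E'c[OF a] E'c[OF b] Xc by (simp add: P.r_distr P.m_ac)
      finally show "?X \<otimes>\<^bsub>P\<^esub> E' (a \<otimes>\<^bsub>P\<^esub> b) = ?X \<otimes>\<^bsub>P\<^esub> (a \<otimes>\<^bsub>P\<^esub> E' b \<oplus>\<^bsub>P\<^esub> E' a \<otimes>\<^bsub>P\<^esub> b)" .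
    qed (use a b E'c in auto)
  qed
  have E'lin: "E' (UPm P (\<phi> c) 0 \<otimes>\<^bsub>P\<^esub> f) = UPm P (\<phi> c) 0 \<otimes>\<^bsub>P\<^esub> E' f" if f: "f \<in> carrier P" for c f
  proof (rule X_cancel)
    have pc: "UPm P (\<phi> c) 0 \<in> carrier P" using phic by simp
    have "?X \<otimes>\<^bsub>P\<^esub> E' (UPm P (\<phi> c) 0 \<otimes>\<^bsub>P\<^esub> f) = E (UPm P (\<phi> c) 0 \<otimes>\<^bsub>P\<^esub> f)"
      by (rule EE'[symmetric]) (use pc f in simp)
    also have "\<dots> = UPm P (\<phi> c) 0 \<otimes>\<^bsub>P\<^esub> E f" by (rule linE[OF f])
    also have "\<dots> = UPm P (\<phi> c) 0 \<otimes>\<^bsub>P\<^esub> (?X \<otimes>\<^bsub>P\<^esub> E' f)" using EE'[OF f] by simp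
    also have "\<dots> = ?X \<otimes>\<^bsub>P\<^esub> (UPm P (\<phi> c) 0 \<otimes>\<^bsub>P\<^esub> E' f)"
      using pc E'c[OF f] Xc by (simp add: P.m_lcomm)
    finally show "?X \<otimes>\<^bsub>P\<^esub> E' (UPm P (\<phi> c) 0 \<otimes>\<^bsub>P\<^esub> f) = ?X \<otimes>\<^bsub>P\<^esub> (UPm P (\<phi> c) 0 \<otimes>\<^bsub>P\<^esub> E' f)" .
  qed (use f E'c phic in auto)
  have E'X: "E' ?X = \<zero>\<^bsub>P\<^esub>"
  proof (rule X_cancel)
    show "?X \<otimes>\<^bsub>P\<^esub> E' ?X = ?X \<otimes>\<^bsub>P\<^esub> \<zero>\<^bsub>P\<^esub>" using EE'[OF Xc] EX by simp
  qed (use E'c Xc in auto)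
  have Emon: "E (UPm P \<one> n) = \<zero>\<^bsub>P\<^esub>" for n
  proof (induction n)
    case 0 show ?case using E.D_one by (simp add: monom_one)
  next
    case (Suc n) show ?case using EXm[of "UPm P \<one> n"] Suc monom1_Suc[of n] by simp
  qed
  have Emonm: "E (UPm P \<one> n \<otimes>\<^bsub>P\<^esub> h) = UPm P \<one> n \<otimes>\<^bsub>P\<^esub> E h" if h: "h \<in> carrier P" for n h
    using E.D_mult[of "UPm P \<one> n" h] Emon[of n] h E.D_cl by simp
  have Epow: "(E ^^ n) f = UPm P \<one> n \<otimes>\<^bsub>P\<^esub> (E' ^^ n) f" if f: "f \<in> carrier P" for n f
  proof (induction n)
    case 0 show ?case using f by (simp add: monom_one)
  next
    case (Suc n)
    have "(E ^^ Suc n) f = E (UPm P \<one> n \<otimes>\<^bsub>P\<^esub> (E' ^^ n) f)" using Suc by simp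
    also have "\<dots> = UPm P \<one> n \<otimes>\<^bsub>P\<^esub> (?X \<otimes>\<^bsub>P\<^esub> (E' ^^ Suc n) f)"
      using Emonm[OF E'.Dpow_cl[OF f, of n]] EE'[OF E'.Dpow_cl[OF f, of n]] by simp
    also have "\<dots> = UPm P \<one> (Suc n) \<otimes>\<^bsub>P\<^esub> (E' ^^ Suc n) f"
      using monom_mult[of \<one> \<one> n 1] E'.Dpow_cl[OF f, of "Suc n"] Xc
      by (simp add: P.m_assoc[symmetric] add.commute)
    finally show ?case .
  qed
  have lndE': "\<exists>n. (E' ^^ n) f = \<zero>\<^bsub>P\<^esub>" if f: "f \<in> carrier P" for f
  proof -
    obtain n where "(E ^^ n) f = \<zero>\<^bsub>P\<^esub>" using lndE f by blast
    hence "UPm P \<one> n \<otimes>\<^bsub>P\<^esub> (E' ^^ n) f = \<zero>\<^bsub>P\<^esub>" using Epow f by simp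
    thus ?thesis using monom1_cancel E'.Dpow_cl f by blast
  qed
  have "goodE R \<phi> E'"
    unfolding goodE_def using E'.deriv_axioms E'lin lndE' E'X by (simp add: P_def)
  thus ?thesis using EE' by blast
qed

lemma goodE_zero:
  assumes phi: "\<phi> \<in> ring_hom complex_ring R" and rig: "rigid R \<phi>" and gE: "goodE R \<phi> E"
    and f: "f \<in> carrier P"
  shows "E f = \<zero>\<^bsub>P\<^esub>"
proof -
  have "\<forall>E. goodE R \<phi> E \<longrightarrow> (\<forall>f\<in>carrier P. \<exists>h\<in>carrier P. E f = UPm P \<one> n \<otimes>\<^bsub>P\<^esub> h)" for n
  proof (induction n)
    case 0
    show ?case
    proof (intro allI impI ballI)
      fix E f assume g: "goodE R \<phi> E" and f: "f \<in> carrier P"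
      interpret deriv P E using g unfolding goodE_def P_def by simp
      show "\<exists>h\<in>carrier P. E f = UPm P \<one> 0 \<otimes>\<^bsub>P\<^esub> h" using f D_cl by (intro bexI[of _ "E f"]) (auto simp: monom_one)
    qed
  next
    case (Suc n)
    show ?case
    proof (intro allI impI ballI)
      fix E f assume g: "goodE R \<phi> E" and f: "f \<in> carrier P"
      obtain E' where E': "goodE R \<phi> E'" "\<forall>f\<in>carrier P. E f = UPm P \<one> 1 \<otimes>\<^bsub>P\<^esub> E' f"
        using goodE_step[OF phi rig g] by blast
      obtain h where h: "h \<in> carrier P" "E' f = UPm P \<one> n \<otimes>\<^bsub>P\<^esub> h" using Suc E'(1) f by blast
      have "E f = UPm P \<one> 1 \<otimes>\<^bsub>P\<^esub> (UPm P \<one> n \<otimes>\<^bsub>P\<^esub> h)" using E'(2) f h by simp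
      also have "\<dots> = UPm P \<one> (Suc n) \<otimes>\<^bsub>P\<^esub> h" using h monom1_Suc[of n] by (simp add: P.m_assoc)
      finally show "\<exists>h\<in>carrier P. E f = UPm P \<one> (Suc n) \<otimes>\<^bsub>P\<^esub> h" using h by blast
    qed
  qed
  hence dv: "\<And>n. \<exists>h\<in>carrier P. E f = UPm P \<one> n \<otimes>\<^bsub>P\<^esub> h" using gE f by blast
  interpret deriv P E using gE unfolding goodE_def P_def by simp
  show ?thesis by (rule divisible_all_zero[OF D_cl[OF f] dv])
qed

end



lemma phi_cl: "\<phi> \<in> ring_hom complex_ring R \<Longrightarrow> \<phi> c \<in> carrier R"
  using ring_hom_closed[of \<phi> complex_ring R c] by (simp add: complex_ring_def)
lemma phi_add: "\<phi> \<in> ring_hom complex_ring R \<Longrightarrow> \<phi> (x + y) = \<phi> x \<oplus>\<^bsub>R\<^esub> \<phi> y"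
  using ring_hom_add[of \<phi> complex_ring R x y] by (simp add: complex_ring_def)
lemma phi_mult: "\<phi> \<in> ring_hom complex_ring R \<Longrightarrow> \<phi> (x * y) = \<phi> x \<otimes>\<^bsub>R\<^esub> \<phi> y"
  using ring_hom_mult[of \<phi> complex_ring R x y] by (simp add: complex_ring_def)
lemma phi_one: "\<phi> \<in> ring_hom complex_ring R \<Longrightarrow> \<phi> 1 = \<one>\<^bsub>R\<^esub>"
  using ring_hom_one[of \<phi> complex_ring R] by (simp add: complex_ring_def)

context UP_domain
begin

lemma phi_nat_nz: "\<phi> \<in> ring_hom complex_ring R \<Longrightarrow> 0 < k \<Longrightarrow> \<phi> (of_nat k) \<noteq> \<zero>"
proof
  assume phi: "\<phi> \<in> ring_hom complex_ring R" and k: "0 < k" and z: "\<phi> (of_nat k) = \<zero>"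
  have "\<one> = \<phi> (of_nat k * inverse (of_nat k))" using k phi_one[OF phi] by simp
  also have "\<dots> = \<phi> (of_nat k) \<otimes> \<phi> (inverse (of_nat k))" by (rule phi_mult[OF phi])
  also have "\<dots> = \<zero>" using z phi_cl[OF phi] by simp
  finally show False by simp
qed

lemma addpow_one_P: "\<phi> \<in> ring_hom complex_ring R \<Longrightarrow> add_pow P k \<one>\<^bsub>P\<^esub> = UPm P (\<phi> (of_nat k)) 0"
proof (induction k)
  case 0
  have "\<phi> 0 \<oplus> \<phi> 0 = \<phi> 0 \<oplus> \<zero>" using phi_add[OF 0, of 0 0] phi_cl[OF 0] by simp
  hence "\<phi> 0 = \<zero>" using phi_cl[OF 0] by (meson R.add.l_cancel R.zero_closed)
  thus ?case by simp
next
  case (Suc k)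
  have "add_pow P (Suc k) \<one>\<^bsub>P\<^esub> = UPm P (\<phi> (of_nat k)) 0 \<oplus>\<^bsub>P\<^esub> UPm P \<one> 0" using Suc by (simp add: monom_one)
  also have "\<dots> = UPm P (\<phi> (of_nat k) \<oplus> \<one>) 0" using phi_cl[OF Suc.prems] by simp
  also have "\<dots> = UPm P (\<phi> (of_nat (Suc k))) 0" using phi_add[OF Suc.prems, of "of_nat k" 1] phi_one[OF Suc.prems] by (simp add: add.commute)
  finally show ?case .
qed

lemma char0_P:
  assumes phi: "\<phi> \<in> ring_hom complex_ring R" and k: "0 < k" and a: "a \<in> carrier P" "a \<noteq> \<zero>\<^bsub>P\<^esub>"
  shows "add_pow P (k::nat) a \<noteq> \<zero>\<^bsub>P\<^esub>"
proof -
  have "add_pow P k a = add_pow P k \<one>\<^bsub>P\<^esub> \<otimes>\<^bsub>P\<^esub> a" using P.add_pow_ldistr[of "\<one>\<^bsub>P\<^esub>" a k] a by simp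
  also have "\<dots> = UPm P (\<phi> (of_nat k)) 0 \<otimes>\<^bsub>P\<^esub> a" using addpow_one_P[OF phi] by simp
  finally have e: "add_pow P k a = UPm P (\<phi> (of_nat k)) 0 \<otimes>\<^bsub>P\<^esub> a" .
  have nz: "UPm P (\<phi> (of_nat k)) 0 \<noteq> \<zero>\<^bsub>P\<^esub>"
  proof
    assume "UPm P (\<phi> (of_nat k)) 0 = \<zero>\<^bsub>P\<^esub>"
    hence "UPc P (UPm P (\<phi> (of_nat k)) 0) 0 = UPc P \<zero>\<^bsub>P\<^esub> 0" by simp
    thus False using phi_nat_nz[OF phi k] phi_cl[OF phi] by simp
  qed
  show ?thesis
  proof
    assume "add_pow P k a = \<zero>\<^bsub>P\<^esub>"
    hence "UPm P (\<phi> (of_nat k)) 0 \<otimes>\<^bsub>P\<^esub> a = \<zero>\<^bsub>P\<^esub>" using e by simp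
    hence "UPm P (\<phi> (of_nat k)) 0 = \<zero>\<^bsub>P\<^esub> \<or> a = \<zero>\<^bsub>P\<^esub>"
      by (rule domain.integral[OF domP]) (use a phi_cl[OF phi] in simp_all)
    thus False using nz a by blast
  qed
qed

end



context UP_domain
begin

lemma hard_generic:
  fixes B :: "('c, 'd) ring_scheme" and \<chi> :: "complex \<Rightarrow> 'c" and D \<pi> \<pi>' s u w
  assumes phi: "\<phi> \<in> ring_hom complex_ring R" and rig: "rigid R \<phi>"
    and cB: "cring B" and dD: "deriv B D"
    and linD: "\<And>c b. b \<in> carrier B \<Longrightarrow> D (\<chi> c \<otimes>\<^bsub>B\<^esub> b) = \<chi> c \<otimes>\<^bsub>B\<^esub> D b"
    and chic: "\<And>c. \<chi> c \<in> carrier B"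
    and lndD: "\<And>b. b \<in> carrier B \<Longrightarrow> \<exists>n. (D ^^ n) b = \<zero>\<^bsub>B\<^esub>"
    and pi: "\<pi> \<in> ring_hom B P" and pi': "\<pi>' \<in> ring_hom B P"
    and sc: "\<And>f. f \<in> carrier P \<Longrightarrow> s f \<in> carrier B" and ps: "\<And>f. f \<in> carrier P \<Longrightarrow> \<pi> (s f) = f"
    and uc: "u \<in> carrier B" and wc: "w \<in> carrier B" and wu: "w \<otimes>\<^bsub>B\<^esub> u = \<zero>\<^bsub>B\<^esub>"
    and pu: "\<pi> u = \<zero>\<^bsub>P\<^esub>" and pw: "\<pi> w = UPm P \<one> 1" and pw': "\<pi>' w = \<zero>\<^bsub>P\<^esub>" and pu': "\<pi>' u = UPm P \<one> 1"
    and ker: "\<And>b. b \<in> carrier B \<Longrightarrow> \<pi> b = \<zero>\<^bsub>P\<^esub> \<Longrightarrow> \<exists>c\<in>carrier B. b = u \<otimes>\<^bsub>B\<^esub> c"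
    and ker': "\<And>b. b \<in> carrier B \<Longrightarrow> \<pi>' b = \<zero>\<^bsub>P\<^esub> \<Longrightarrow> \<exists>c\<in>carrier B. b = w \<otimes>\<^bsub>B\<^esub> c"
    and pchi: "\<And>c. \<pi> (\<chi> c) = UPm P (\<phi> c) 0"
    and b: "b \<in> carrier B"
  shows "\<pi> (D b) = \<zero>\<^bsub>P\<^esub>"
proof -
  interpret B: cring B by (rule cB)
  interpret D: deriv B D by (rule dD)
  interpret H: ring_hom_cring B P \<pi> by (rule ring_hom_cringI[OF cB P.is_cring pi])
  interpret H': ring_hom_cring B P \<pi>' by (rule ring_hom_cringI[OF cB P.is_cring pi'])
  let ?X = "UPm P \<one> 1"
  have Xc: "?X \<in> carrier P" by simp
  have DwDu: "w \<otimes>\<^bsub>B\<^esub> D u \<oplus>\<^bsub>B\<^esub> D w \<otimes>\<^bsub>B\<^esub> u = \<zero>\<^bsub>B\<^esub>"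
    using D.D_mult[OF wc uc] wu by simp
  have pDu: "\<pi> (D u) = \<zero>\<^bsub>P\<^esub>"
  proof -
    have "\<pi> (w \<otimes>\<^bsub>B\<^esub> D u \<oplus>\<^bsub>B\<^esub> D w \<otimes>\<^bsub>B\<^esub> u) = \<zero>\<^bsub>P\<^esub>" using DwDu by simp
    hence "?X \<otimes>\<^bsub>P\<^esub> \<pi> (D u) = \<zero>\<^bsub>P\<^esub>"
      using uc wc D.D_cl pu pw by (simp add: H.hom_add H.hom_mult)
    thus ?thesis using monom1_cancel[of "\<pi> (D u)" 1] uc D.D_cl by simp
  qed
  have pDw': "\<pi>' (D w) = \<zero>\<^bsub>P\<^esub>"
  proof -
    have "\<pi>' (w \<otimes>\<^bsub>B\<^esub> D u \<oplus>\<^bsub>B\<^esub> D w \<otimes>\<^bsub>B\<^esub> u) = \<zero>\<^bsub>P\<^esub>" using DwDu by simp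
    hence "\<pi>' (D w) \<otimes>\<^bsub>P\<^esub> ?X = \<zero>\<^bsub>P\<^esub>"
      using uc wc D.D_cl pu' pw' by (simp add: H'.hom_add H'.hom_mult)
    hence "?X \<otimes>\<^bsub>P\<^esub> \<pi>' (D w) = \<zero>\<^bsub>P\<^esub>" using wc D.D_cl by (simp add: P.m_comm)
    thus ?thesis using monom1_cancel[of "\<pi>' (D w)" 1] wc D.D_cl by simp
  qed
  obtain cw where cw: "cw \<in> carrier B" "D w = w \<otimes>\<^bsub>B\<^esub> cw" using ker'[OF D.D_cl[OF wc] pDw'] by blast
  have kst: "\<pi> (D b) = \<zero>\<^bsub>P\<^esub>" if b: "b \<in> carrier B" "\<pi> b = \<zero>\<^bsub>P\<^esub>" for b
  proof -
    obtain c where c: "c \<in> carrier B" "b = u \<otimes>\<^bsub>B\<^esub> c" using ker b by blast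
    have "\<pi> (D b) = \<pi> (u \<otimes>\<^bsub>B\<^esub> D c \<oplus>\<^bsub>B\<^esub> D u \<otimes>\<^bsub>B\<^esub> c)" using c D.D_mult uc by simp
    also have "\<dots> = \<zero>\<^bsub>P\<^esub>" using c uc D.D_cl pu pDu by (simp add: H.hom_add H.hom_mult)
    finally show ?thesis .
  qed
  define E where "E f = \<pi> (D (s f))" for f
  have comm: "\<pi> (D b) = E (\<pi> b)" if b: "b \<in> carrier B" for b
  proof -
    let ?b' = "s (\<pi> b)"
    have b'c: "?b' \<in> carrier B" using sc b by simp
    have "\<pi> (b \<ominus>\<^bsub>B\<^esub> ?b') = \<zero>\<^bsub>P\<^esub>" using b b'c ps[of "\<pi> b"] by (simp add: H.hom_sub)
    hence "\<pi> (D (b \<ominus>\<^bsub>B\<^esub> ?b')) = \<zero>\<^bsub>P\<^esub>" using kst b b'c by simp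
    hence "\<pi> (D b) \<ominus>\<^bsub>P\<^esub> \<pi> (D ?b') = \<zero>\<^bsub>P\<^esub>" using b b'c D.D_minus D.D_cl by (simp add: H.hom_sub)
    hence "\<pi> (D b) = \<pi> (D ?b')" using b b'c D.D_cl by (simp add: P.r_right_minus_eq)
    thus ?thesis by (simp add: E_def)
  qed
  have Ec: "E f \<in> carrier P" if "f \<in> carrier P" for f using that sc D.D_cl by (simp add: E_def)
  interpret E: deriv P E
  proof
    fix a assume "a \<in> carrier P" thus "E a \<in> carrier P" by (rule Ec)
  next
    fix f g assume f: "f \<in> carrier P" and g: "g \<in> carrier P"
    have "E (f \<oplus>\<^bsub>P\<^esub> g) = E (\<pi> (s f \<oplus>\<^bsub>B\<^esub> s g))" using f g sc ps by (simp add: H.hom_add)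
    also have "\<dots> = \<pi> (D (s f \<oplus>\<^bsub>B\<^esub> s g))" using comm f g sc by simp
    also have "\<dots> = E f \<oplus>\<^bsub>P\<^esub> E g" using f g sc D.D_add D.D_cl by (simp add: H.hom_add E_def)
    finally show "E (f \<oplus>\<^bsub>P\<^esub> g) = E f \<oplus>\<^bsub>P\<^esub> E g" .
    have "E (f \<otimes>\<^bsub>P\<^esub> g) = E (\<pi> (s f \<otimes>\<^bsub>B\<^esub> s g))" using f g sc ps by (simp add: H.hom_mult)
    also have "\<dots> = \<pi> (D (s f \<otimes>\<^bsub>B\<^esub> s g))" using comm f g sc by simp
    also have "\<dots> = f \<otimes>\<^bsub>P\<^esub> E g \<oplus>\<^bsub>P\<^esub> E f \<otimes>\<^bsub>P\<^esub> g" using f g sc ps D.D_mult D.D_cl by (simp add: H.hom_add H.hom_mult E_def)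
    finally show "E (f \<otimes>\<^bsub>P\<^esub> g) = f \<otimes>\<^bsub>P\<^esub> E g \<oplus>\<^bsub>P\<^esub> E f \<otimes>\<^bsub>P\<^esub> g" .
  qed
  have Elin: "E (UPm P (\<phi> c) 0 \<otimes>\<^bsub>P\<^esub> f) = UPm P (\<phi> c) 0 \<otimes>\<^bsub>P\<^esub> E f" if f: "f \<in> carrier P" for c f
  proof -
    have "E (UPm P (\<phi> c) 0 \<otimes>\<^bsub>P\<^esub> f) = E (\<pi> (\<chi> c \<otimes>\<^bsub>B\<^esub> s f))" using f sc ps chic pchi by (simp add: H.hom_mult)
    also have "\<dots> = \<pi> (D (\<chi> c \<otimes>\<^bsub>B\<^esub> s f))" using comm f sc chic by simp
    also have "\<dots> = UPm P (\<phi> c) 0 \<otimes>\<^bsub>P\<^esub> E f" using f sc chic linD pchi D.D_cl by (simp add: H.hom_mult E_def)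
    finally show ?thesis .
  qed
  have Epow: "(E ^^ n) (\<pi> b) = \<pi> ((D ^^ n) b)" if b: "b \<in> carrier B" for n b
  proof (induction n)
    case 0 show ?case by simp
  next
    case (Suc n) show ?case using Suc comm[OF D.Dpow_cl[OF b, of n]] by simp
  qed
  have Elnd: "\<exists>n. (E ^^ n) f = \<zero>\<^bsub>P\<^esub>" if f: "f \<in> carrier P" for f
  proof -
    obtain n where "(D ^^ n) (s f) = \<zero>\<^bsub>B\<^esub>" using lndD sc f by blast
    hence "(E ^^ n) (\<pi> (s f)) = \<zero>\<^bsub>P\<^esub>" using Epow[of "s f" n] sc f by simp
    thus ?thesis using ps f by auto
  qed
  have EX: "E ?X = ?X \<otimes>\<^bsub>P\<^esub> \<pi> cw"
  proof -
    have "E ?X = \<pi> (D w)" using comm[OF wc] pw by simp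
    also have "\<dots> = ?X \<otimes>\<^bsub>P\<^esub> \<pi> cw" using cw wc pw by (simp add: H.hom_mult)
    finally show ?thesis .
  qed
  interpret Ed: deriv_dom P E
  proof
    fix k :: nat and a assume "0 < k" "a \<in> carrier P" "a \<noteq> \<zero>\<^bsub>P\<^esub>"
    thus "add_pow P (k::nat) a \<noteq> \<zero>\<^bsub>P\<^esub>" using char0_P[OF phi] by blast
  next
    fix a assume "a \<in> carrier P" thus "\<exists>n. (E ^^ n) a = \<zero>\<^bsub>P\<^esub>" by (rule Elnd)
  qed
  have EX0: "E ?X = \<zero>\<^bsub>P\<^esub>" using Ed.eigen_zero[OF Xc _ EX] cw by simp
  have "goodE R \<phi> E" unfolding goodE_def using E.deriv_axioms Elin Elnd EX0 by (simp add: P_def)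
  hence "E (\<pi> b) = \<zero>\<^bsub>P\<^esub>" using goodE_zero[OF phi rig] b by simp
  thus ?thesis using comm[OF b] by simp
qed

end



definition qlift :: "('a, 'b) ring_scheme \<Rightarrow> 'a set \<Rightarrow> ('a \<Rightarrow> 'c) \<Rightarrow> 'a set \<Rightarrow> 'c" where
  "qlift P I f C = f (SOME p. p \<in> carrier P \<and> C = I +>\<^bsub>P\<^esub> p)"

context ideal
begin

lemma quot_carrier: "carrier (R Quot I) = {I +> p | p. p \<in> carrier R}"
  unfolding FactRing_def A_RCOSETS_def RCOSETS_def a_r_coset_def by auto

lemma quot_zero: "\<zero>\<^bsub>R Quot I\<^esub> = I" by (simp add: FactRing_def)

lemma quot_add: "p \<in> carrier R \<Longrightarrow> q \<in> carrier R \<Longrightarrow> (I +> p) \<oplus>\<^bsub>R Quot I\<^esub> (I +> q) = I +> (p \<oplus> q)"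
  using ring_hom_add[OF rcos_ring_hom] by simp

lemma quot_mult: "p \<in> carrier R \<Longrightarrow> q \<in> carrier R \<Longrightarrow> (I +> p) \<otimes>\<^bsub>R Quot I\<^esub> (I +> q) = I +> (p \<otimes> q)"
  using ring_hom_mult[OF rcos_ring_hom] by simp

lemma coset_zero_iff: "p \<in> carrier R \<Longrightarrow> (I +> p = I) \<longleftrightarrow> p \<in> I"
  using rcos_const_imp_mem a_rcos_zero[OF is_ideal] by blast

lemma coset_eq_iff:
  assumes p: "p \<in> carrier R" and q: "q \<in> carrier R"
  shows "(I +> p = I +> q) \<longleftrightarrow> p \<ominus> q \<in> I"
proof -
  interpret h: ring_hom_ring R "R Quot I" "(+>) I" by (rule rcos_ring_hom_ring)
  have "I +> (p \<ominus> q) = (I +> p) \<ominus>\<^bsub>R Quot I\<^esub> (I +> q)" using p q by (simp add: a_minus_def)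
  hence "(I +> p = I +> q) \<longleftrightarrow> I +> (p \<ominus> q) = I"
    using p q ring.r_right_minus_eq[OF quotient_is_ring, of "I +> p" "I +> q"] quot_zero
      ring_hom_closed[OF rcos_ring_hom, of p] ring_hom_closed[OF rcos_ring_hom, of q] by simp
  thus ?thesis using coset_zero_iff p q by simp
qed

lemma qlift_eq:
  assumes wd: "\<And>p q. p \<in> carrier R \<Longrightarrow> q \<in> carrier R \<Longrightarrow> p \<ominus> q \<in> I \<Longrightarrow> f p = f q"
    and p: "p \<in> carrier R"
  shows "qlift R I f (I +> p) = f p"
proof -
  define p' where "p' = (SOME p'. p' \<in> carrier R \<and> I +> p = I +> p')"
  have "p' \<in> carrier R \<and> I +> p = I +> p'" unfolding p'_def by (rule someI[of _ p]) (use p in simp)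
  hence "f p' = f p" using wd[of p' p] coset_eq_iff[of p' p] p by auto
  thus ?thesis unfolding qlift_def p'_def by simp
qed

lemma quot_cases: "C \<in> carrier (R Quot I) \<Longrightarrow> (\<And>p. p \<in> carrier R \<Longrightarrow> C = I +> p \<Longrightarrow> thesis) \<Longrightarrow> thesis"
  using quot_carrier by auto

end



locale XYc =
  fixes R :: "('a, 'b) ring_scheme" (structure)
  assumes dom: "domain R"

sublocale XYc \<subseteq> Q: UP_domain R "UP R"
  by (simp add: UP_domain_def dom)

sublocale XYc \<subseteq> P2: UP_domain "UP R" "UP (UP R)"
  by (simp add: UP_domain_def Q.domP)

context XYc
begin

abbreviation "Q \<equiv> UP R"
abbreviation "P2 \<equiv> UP (UP R)"

definition piX :: "(nat \<Rightarrow> nat \<Rightarrow> 'a) \<Rightarrow> nat \<Rightarrow> 'a" where "piX p = UPc P2 p 0"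
definition piY :: "(nat \<Rightarrow> nat \<Rightarrow> 'a) \<Rightarrow> nat \<Rightarrow> 'a" where "piY p = (\<lambda>i. UPc Q (UPc P2 p i) 0)"

lemma zeroQ: "\<zero>\<^bsub>Q\<^esub> = (\<lambda>i. \<zero>)" by (simp add: UP_def)

lemma piX_hom: "piX \<in> ring_hom P2 Q"
  unfolding piX_def by (rule P2.ev0_hom)

lemma ev0Q: "ring_hom_cring Q R (\<lambda>f. UPc Q f 0)"
  by (rule ring_hom_cringI[OF Q.UP_cring Q.R.is_cring Q.ev0_hom])

lemma piY_closed: "p \<in> carrier P2 \<Longrightarrow> piY p \<in> carrier Q"
proof -
  assume p: "p \<in> carrier P2"
  then obtain n where n: "bound \<zero>\<^bsub>Q\<^esub> n p" using P2.carrier_P_up by auto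
  have "bound \<zero> n (piY p)"
  proof
    fix m assume "n < m"
    hence "p m = \<zero>\<^bsub>Q\<^esub>" using n unfolding bound_def by auto
    thus "piY p m = \<zero>" using p by (simp add: piY_def P2.coeff_P_app)
  qed
  moreover have "\<And>k. piY p k \<in> carrier R" using p by (simp add: piY_def)
  ultimately have "piY p \<in> up R" by (intro mem_upI) auto
  thus ?thesis by (simp add: Q.carrier_P_up)
qed

lemma coeff_piY: "p \<in> carrier P2 \<Longrightarrow> UPc Q (piY p) i = UPc Q (UPc P2 p i) 0"
  using piY_closed by (simp add: Q.coeff_P_app piY_def)

lemma piY_hom: "piY \<in> ring_hom P2 Q"
proof (rule ring_hom_memI)
  interpret E0: ring_hom_cring Q R "\<lambda>f. UPc Q f 0" by (rule ev0Q)
  fix p q assume p: "p \<in> carrier P2" and q: "q \<in> carrier P2"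
  show "piY p \<in> carrier Q" by (rule piY_closed[OF p])
  show "piY (p \<otimes>\<^bsub>P2\<^esub> q) = piY p \<otimes>\<^bsub>Q\<^esub> piY q"
  proof (rule Q.up_eqI)
    fix n
    have "UPc Q (piY (p \<otimes>\<^bsub>P2\<^esub> q)) n = UPc Q (\<Oplus>\<^bsub>Q\<^esub>i\<in>{..n}. UPc P2 p i \<otimes>\<^bsub>Q\<^esub> UPc P2 q (n - i)) 0"
      using p q by (simp add: coeff_piY del: Q.coeff_mult)
    also have "\<dots> = (\<Oplus>i\<in>{..n}. UPc Q (UPc P2 p i \<otimes>\<^bsub>Q\<^esub> UPc P2 q (n - i)) 0)"
      using E0.hom_finsum[of "\<lambda>i. UPc P2 p i \<otimes>\<^bsub>Q\<^esub> UPc P2 q (n - i)" "{..n}"] p q by (simp add: comp_def del: Q.coeff_mult)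
    also have "\<dots> = (\<Oplus>i\<in>{..n}. UPc Q (piY p) i \<otimes> UPc Q (piY q) (n - i))"
      using p q by (intro Q.R.finsum_cong) (auto simp: coeff_piY Q.coeff_mult0)
    also have "\<dots> = UPc Q (piY p \<otimes>\<^bsub>Q\<^esub> piY q) n" using piY_closed p q by simp
    finally show "UPc Q (piY (p \<otimes>\<^bsub>P2\<^esub> q)) n = UPc Q (piY p \<otimes>\<^bsub>Q\<^esub> piY q) n" .
  qed (use p q piY_closed in auto)
  show "piY (p \<oplus>\<^bsub>P2\<^esub> q) = piY p \<oplus>\<^bsub>Q\<^esub> piY q"
    by (rule Q.up_eqI) (use p q piY_closed in \<open>auto simp: coeff_piY\<close>)
next
  show "piY \<one>\<^bsub>P2\<^esub> = \<one>\<^bsub>Q\<^esub>"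
    by (rule Q.up_eqI) (auto simp: coeff_piY piY_closed)
qed


lemma XXc: "varX R \<in> carrier P2" by (simp add: varX_def)
lemma YYc: "varY R \<in> carrier P2" by (simp add: varY_def)
lemma constc: "a \<in> carrier R \<Longrightarrow> constXY R a \<in> carrier P2" by (simp add: constXY_def)

lemma piX_X: "piX (varX R) = UPm Q \<one> 1" by (simp add: piX_def varX_def)
lemma piX_Y: "piX (varY R) = \<zero>\<^bsub>Q\<^esub>" by (simp add: piX_def varY_def)
lemma piY_X: "piY (varX R) = \<zero>\<^bsub>Q\<^esub>"
  by (rule Q.up_eqI) (auto simp: coeff_piY varX_def piY_closed)
lemma piY_Y: "piY (varY R) = UPm Q \<one> 1"
  by (rule Q.up_eqI) (auto simp: coeff_piY varY_def piY_closed)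
lemma piX_const: "a \<in> carrier R \<Longrightarrow> piX (constXY R a) = UPm Q a 0" by (simp add: piX_def constXY_def)
lemma piY_const: "a \<in> carrier R \<Longrightarrow> piY (constXY R a) = UPm Q a 0"
  by (rule Q.up_eqI) (auto simp: coeff_piY constXY_def piY_closed)

lemma I_eq: "XY_ideal R = PIdl\<^bsub>P2\<^esub> (varX R \<otimes>\<^bsub>P2\<^esub> varY R)"
  unfolding XY_ideal_def polyXY_def using P2.cgenideal_eq_genideal[of "varX R \<otimes>\<^bsub>P2\<^esub> varY R"] XXc YYc by simp

lemma I_ideal: "ideal (XY_ideal R) P2"
  unfolding I_eq using P2.cgenideal_ideal XXc YYc by simp

lemma I_mem: "p \<in> XY_ideal R \<longleftrightarrow> (\<exists>x\<in>carrier P2. p = x \<otimes>\<^bsub>P2\<^esub> (varX R \<otimes>\<^bsub>P2\<^esub> varY R))"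
  unfolding I_eq cgenideal_def by auto

lemma piX_I: "p \<in> XY_ideal R \<Longrightarrow> piX p = \<zero>\<^bsub>Q\<^esub>"
  using I_mem[of p] XXc YYc ring_hom_mult[OF piX_hom] ring_hom_closed[OF piX_hom] piX_Y by auto

lemma piY_I: "p \<in> XY_ideal R \<Longrightarrow> piY p = \<zero>\<^bsub>Q\<^esub>"
  using I_mem[of p] XXc YYc ring_hom_mult[OF piY_hom] ring_hom_closed[OF piY_hom] piY_X by auto

lemma kerX: "p \<in> carrier P2 \<Longrightarrow> piX p = \<zero>\<^bsub>Q\<^esub> \<Longrightarrow> p = varY R \<otimes>\<^bsub>P2\<^esub> P2.shiftp p"
  using P2.shiftp_eq[of p] by (simp add: piX_def varY_def)

lemma kerY:
  assumes p: "p \<in> carrier P2" and p0: "piY p = \<zero>\<^bsub>Q\<^esub>"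
  shows "\<exists>q\<in>carrier P2. p = varX R \<otimes>\<^bsub>P2\<^esub> q"
proof -
  define q where "q = (\<lambda>i. Q.shiftp (UPc P2 p i))"
  have ci: "UPc Q (UPc P2 p i) 0 = \<zero>" for i
  proof -
    have "piY p i = \<zero>" using p0 by (simp add: zeroQ)
    thus ?thesis by (simp add: piY_def)
  qed
  obtain n where n: "bound \<zero>\<^bsub>Q\<^esub> n p" using p P2.carrier_P_up by auto
  have sh0: "Q.shiftp \<zero>\<^bsub>Q\<^esub> = \<zero>\<^bsub>Q\<^esub>"
  proof -
    have "Q.shiftp \<zero>\<^bsub>Q\<^esub> = (\<lambda>n. \<zero>)" unfolding Q.shiftp_def by simp
    thus ?thesis by (simp only: zeroQ)
  qed
  have "bound \<zero>\<^bsub>Q\<^esub> n q"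
  proof
    fix m assume "n < m"
    hence "p m = \<zero>\<^bsub>Q\<^esub>" using n unfolding bound_def by auto
    thus "q m = \<zero>\<^bsub>Q\<^esub>" using p sh0 by (simp add: q_def P2.coeff_P_app)
  qed
  moreover have "\<And>k. q k \<in> carrier Q" using p Q.shiftp_closed by (simp add: q_def)
  ultimately have "q \<in> up Q" by (intro mem_upI) auto
  hence qc: "q \<in> carrier P2" by (simp add: P2.carrier_P_up)
  have "varX R \<otimes>\<^bsub>P2\<^esub> q = UPm Q \<one> 1 \<odot>\<^bsub>P2\<^esub> q"
    unfolding varX_def using P2.monom_mult_is_smult[of "UPm Q \<one> 1" q] qc by simp
  also have "\<dots> = p"
  proof (rule P2.up_eqI)
    fix i
    have "UPc P2 q i = Q.shiftp (UPc P2 p i)" using qc by (simp add: P2.coeff_P_app q_def)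
    thus "UPc P2 (UPm Q \<one> 1 \<odot>\<^bsub>P2\<^esub> q) i = UPc P2 p i"
      using qc p Q.shiftp_eq[of "UPc P2 p i"] ci[of i] by simp
  qed (use p qc in auto)
  finally show ?thesis using qc by auto
qed

lemma joint:
  assumes p: "p \<in> carrier P2" and px: "piX p = \<zero>\<^bsub>Q\<^esub>" and py: "piY p = \<zero>\<^bsub>Q\<^esub>"
  shows "p \<in> XY_ideal R"
proof -
  let ?p' = "P2.shiftp p"
  have p'c: "?p' \<in> carrier P2" using P2.shiftp_closed p by simp
  have pe: "p = varY R \<otimes>\<^bsub>P2\<^esub> ?p'" using kerX p px by simp
  have "UPm Q \<one> 1 \<otimes>\<^bsub>Q\<^esub> piY ?p' = \<zero>\<^bsub>Q\<^esub>"
    using py pe ring_hom_mult[OF piY_hom, of "varY R" ?p'] YYc p'c piY_Y by simp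
  hence "piY ?p' = \<zero>\<^bsub>Q\<^esub>" using Q.monom1_cancel piY_closed p'c by blast
  then obtain q where q: "q \<in> carrier P2" "?p' = varX R \<otimes>\<^bsub>P2\<^esub> q" using kerY p'c by blast
  have "p = q \<otimes>\<^bsub>P2\<^esub> (varX R \<otimes>\<^bsub>P2\<^esub> varY R)"
    using pe q XXc YYc by (simp add: P2.m_ac)
  thus ?thesis using I_mem q by blast
qed

definition sX :: "(nat \<Rightarrow> 'a) \<Rightarrow> (nat \<Rightarrow> nat \<Rightarrow> 'a)" where "sX f = UPm P2 f 0"
definition sY :: "(nat \<Rightarrow> 'a) \<Rightarrow> (nat \<Rightarrow> nat \<Rightarrow> 'a)" where "sY f = (\<lambda>i. UPm Q (f i) 0)"

lemma sX_c: "f \<in> carrier Q \<Longrightarrow> sX f \<in> carrier P2" by (simp add: sX_def)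
lemma piX_sX: "f \<in> carrier Q \<Longrightarrow> piX (sX f) = f" by (simp add: sX_def piX_def)

lemma sY_c: "f \<in> carrier Q \<Longrightarrow> sY f \<in> carrier P2"
proof -
  assume f: "f \<in> carrier Q"
  obtain n where n: "bound \<zero> n f" using f Q.carrier_P_up by auto
  have "bound \<zero>\<^bsub>Q\<^esub> n (sY f)"
  proof
    fix m assume "n < m"
    hence "f m = \<zero>" using n unfolding bound_def by auto
    thus "sY f m = \<zero>\<^bsub>Q\<^esub>" by (simp add: sY_def)
  qed
  moreover have "sY f k \<in> carrier Q" for k
    using Q.coeff_closed[OF f, of k] Q.coeff_P_app[OF f, of k] by (simp add: sY_def)
  ultimately have "sY f \<in> up Q" by (intro mem_upI) auto
  thus ?thesis by (simp add: P2.carrier_P_up)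
qed

lemma piY_sY: "f \<in> carrier Q \<Longrightarrow> piY (sY f) = f"
proof -
  assume f: "f \<in> carrier Q"
  show ?thesis
  proof (rule Q.up_eqI)
    fix n
    have "UPc P2 (sY f) n = UPm Q (f n) 0" using sY_c[OF f] by (simp add: P2.coeff_P_app sY_def)
    moreover have "f n \<in> carrier R" using Q.coeff_closed[OF f, of n] Q.coeff_P_app[OF f, of n] by simp
    hence "UPc Q (UPc P2 (sY f) n) 0 = f n" using \<open>UPc P2 (sY f) n = UPm Q (f n) 0\<close> by simp
    thus "UPc Q (piY (sY f)) n = UPc Q f n" using coeff_piY[OF sY_c[OF f], of n] Q.coeff_P_app[OF f, of n] by simp
  qed (use f sY_c piY_closed in auto)
qed

end



context XYc
begin

abbreviation "II \<equiv> XY_ideal R"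
abbreviation "BB \<equiv> XY_quot R"

lemma BB_eq: "BB = P2 Quot II" by (simp add: XY_quot_def polyXY_def)

lemma cosB: "p \<in> carrier P2 \<Longrightarrow> II +>\<^bsub>P2\<^esub> p \<in> carrier BB"
  using ideal.quot_carrier[OF I_ideal] BB_eq by auto

lemma cringB: "cring BB" using ideal.quotient_is_cring[OF I_ideal P2.UP_cring] BB_eq by simp

lemma zeroB: "\<zero>\<^bsub>BB\<^esub> = II" using ideal.quot_zero[OF I_ideal] BB_eq by simp

lemma addB: "p \<in> carrier P2 \<Longrightarrow> q \<in> carrier P2 \<Longrightarrow> (II +>\<^bsub>P2\<^esub> p) \<oplus>\<^bsub>BB\<^esub> (II +>\<^bsub>P2\<^esub> q) = II +>\<^bsub>P2\<^esub> (p \<oplus>\<^bsub>P2\<^esub> q)"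
  using ideal.quot_add[OF I_ideal] BB_eq by simp

lemma multB: "p \<in> carrier P2 \<Longrightarrow> q \<in> carrier P2 \<Longrightarrow> (II +>\<^bsub>P2\<^esub> p) \<otimes>\<^bsub>BB\<^esub> (II +>\<^bsub>P2\<^esub> q) = II +>\<^bsub>P2\<^esub> (p \<otimes>\<^bsub>P2\<^esub> q)"
  using ideal.quot_mult[OF I_ideal] BB_eq by simp

lemma oneB: "\<one>\<^bsub>BB\<^esub> = II +>\<^bsub>P2\<^esub> \<one>\<^bsub>P2\<^esub>" by (simp add: BB_eq FactRing_def)

lemma casesB: "C \<in> carrier BB \<Longrightarrow> (\<And>p. p \<in> carrier P2 \<Longrightarrow> C = II +>\<^bsub>P2\<^esub> p \<Longrightarrow> thesis) \<Longrightarrow> thesis"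
  using ideal.quot_cases[OF I_ideal] BB_eq by metis

lemma cos_zero_iff: "p \<in> carrier P2 \<Longrightarrow> (II +>\<^bsub>P2\<^esub> p = \<zero>\<^bsub>BB\<^esub>) \<longleftrightarrow> p \<in> II"
  using ideal.coset_zero_iff[OF I_ideal] zeroB by simp

definition pbX where "pbX = qlift P2 II piX"
definition pbY where "pbY = qlift P2 II piY"

lemma pbX_cos: "p \<in> carrier P2 \<Longrightarrow> pbX (II +>\<^bsub>P2\<^esub> p) = piX p"
  unfolding pbX_def
proof (rule ideal.qlift_eq[OF I_ideal])
  fix p q assume p: "p \<in> carrier P2" and q: "q \<in> carrier P2" and pq: "p \<ominus>\<^bsub>P2\<^esub> q \<in> II"
  interpret H: ring_hom_cring P2 Q piX by (rule ring_hom_cringI[OF P2.UP_cring Q.UP_cring piX_hom])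
  have "piX p \<ominus>\<^bsub>Q\<^esub> piX q = \<zero>\<^bsub>Q\<^esub>" using piX_I[OF pq] p q by simp
  thus "piX p = piX q" using p q by (simp add: Q.P.r_right_minus_eq)
qed

lemma pbY_cos: "p \<in> carrier P2 \<Longrightarrow> pbY (II +>\<^bsub>P2\<^esub> p) = piY p"
  unfolding pbY_def
proof (rule ideal.qlift_eq[OF I_ideal])
  fix p q assume p: "p \<in> carrier P2" and q: "q \<in> carrier P2" and pq: "p \<ominus>\<^bsub>P2\<^esub> q \<in> II"
  interpret H: ring_hom_cring P2 Q piY by (rule ring_hom_cringI[OF P2.UP_cring Q.UP_cring piY_hom])
  have "piY p \<ominus>\<^bsub>Q\<^esub> piY q = \<zero>\<^bsub>Q\<^esub>" using piY_I[OF pq] p q by simp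
  thus "piY p = piY q" using p q by (simp add: Q.P.r_right_minus_eq)
qed

lemma desc_hom:
  assumes h: "h \<in> ring_hom P2 Q" and hc: "\<And>p. p \<in> carrier P2 \<Longrightarrow> g (II +>\<^bsub>P2\<^esub> p) = h p"
  shows "g \<in> ring_hom BB Q"
proof (rule ring_hom_memI)
  fix x y assume x: "x \<in> carrier BB" and y: "y \<in> carrier BB"
  obtain p where p: "p \<in> carrier P2" "x = II +>\<^bsub>P2\<^esub> p" using casesB[OF x] by blast
  obtain q where q: "q \<in> carrier P2" "y = II +>\<^bsub>P2\<^esub> q" using casesB[OF y] by blast
  show "g x \<in> carrier Q" using p hc ring_hom_closed[OF h] by simp
  show "g (x \<otimes>\<^bsub>BB\<^esub> y) = g x \<otimes>\<^bsub>Q\<^esub> g y" using p q hc multB ring_hom_mult[OF h] by simp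
  show "g (x \<oplus>\<^bsub>BB\<^esub> y) = g x \<oplus>\<^bsub>Q\<^esub> g y" using p q hc addB ring_hom_add[OF h] by simp
next
  show "g \<one>\<^bsub>BB\<^esub> = \<one>\<^bsub>Q\<^esub>" using oneB hc ring_hom_one[OF h] by simp
qed

lemma pbX_hom: "pbX \<in> ring_hom BB Q" by (rule desc_hom[OF piX_hom pbX_cos])
lemma pbY_hom: "pbY \<in> ring_hom BB Q" by (rule desc_hom[OF piY_hom pbY_cos])

lemma hard_dir:
  assumes phi: "\<phi> \<in> ring_hom complex_ring R" and rig: "rigid R \<phi>"
  shows "rigid BB (XY_quot_hom R \<phi>)"
  unfolding rigid_def
proof (intro allI impI ballI)
  fix D C assume lnd: "LND BB (XY_quot_hom R \<phi>) D" and C: "C \<in> carrier BB"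
  let ?\<chi> = "XY_quot_hom R \<phi>"
  have phic: "\<phi> c \<in> carrier R" for c by (rule phi_cl[OF phi])
  have chi_eq: "?\<chi> c = II +>\<^bsub>P2\<^esub> constXY R (\<phi> c)" for c by (simp add: XY_quot_hom_def polyXY_def)
  have chic: "?\<chi> c \<in> carrier BB" for c using chi_eq cosB constc phic by simp
  interpret B: cring BB by (rule cringB)
  have dD: "deriv BB D"
    using lnd unfolding LND_def C_derivation_def by (unfold_locales) auto
  have linD: "\<And>c b. b \<in> carrier BB \<Longrightarrow> D (?\<chi> c \<otimes>\<^bsub>BB\<^esub> b) = ?\<chi> c \<otimes>\<^bsub>BB\<^esub> D b"
    using lnd unfolding LND_def C_derivation_def by auto
  have lndD: "\<And>b. b \<in> carrier BB \<Longrightarrow> \<exists>n. (D ^^ n) b = \<zero>\<^bsub>BB\<^esub>"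
    using lnd unfolding LND_def by auto
  define u where "u = II +>\<^bsub>P2\<^esub> varY R"
  define w where "w = II +>\<^bsub>P2\<^esub> varX R"
  have uc: "u \<in> carrier BB" and wc: "w \<in> carrier BB" using cosB XXc YYc by (simp_all add: u_def w_def)
  have wu: "w \<otimes>\<^bsub>BB\<^esub> u = \<zero>\<^bsub>BB\<^esub>"
  proof -
    have "w \<otimes>\<^bsub>BB\<^esub> u = II +>\<^bsub>P2\<^esub> (varX R \<otimes>\<^bsub>P2\<^esub> varY R)" using multB XXc YYc by (simp add: u_def w_def)
    moreover have "varX R \<otimes>\<^bsub>P2\<^esub> varY R \<in> II"
      unfolding I_mem by (rule bexI[of _ "\<one>\<^bsub>P2\<^esub>"]) (use XXc YYc in simp_all)
    ultimately show ?thesis using cos_zero_iff XXc YYc by simp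
  qed
  have uw: "u \<otimes>\<^bsub>BB\<^esub> w = \<zero>\<^bsub>BB\<^esub>" using wu uc wc B.m_comm by simp
  have pu: "pbX u = \<zero>\<^bsub>Q\<^esub>" "pbX w = UPm Q \<one> 1" "pbY w = \<zero>\<^bsub>Q\<^esub>" "pbY u = UPm Q \<one> 1"
    using pbX_cos pbY_cos XXc YYc piX_X piX_Y piY_X piY_Y by (simp_all add: u_def w_def)
  have kerX': "\<exists>c\<in>carrier BB. b = u \<otimes>\<^bsub>BB\<^esub> c" if b: "b \<in> carrier BB" "pbX b = \<zero>\<^bsub>Q\<^esub>" for b
  proof -
    obtain p where p: "p \<in> carrier P2" "b = II +>\<^bsub>P2\<^esub> p" using casesB b by blast
    have "p = varY R \<otimes>\<^bsub>P2\<^esub> P2.shiftp p" using kerX p b pbX_cos by simp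
    hence "b = u \<otimes>\<^bsub>BB\<^esub> (II +>\<^bsub>P2\<^esub> P2.shiftp p)" using p multB YYc P2.shiftp_closed by (simp add: u_def)
    thus ?thesis using cosB P2.shiftp_closed p by blast
  qed
  have kerY': "\<exists>c\<in>carrier BB. b = w \<otimes>\<^bsub>BB\<^esub> c" if b: "b \<in> carrier BB" "pbY b = \<zero>\<^bsub>Q\<^esub>" for b
  proof -
    obtain p where p: "p \<in> carrier P2" "b = II +>\<^bsub>P2\<^esub> p" using casesB b by blast
    have "piY p = \<zero>\<^bsub>Q\<^esub>" using b p pbY_cos by simp
    then obtain q where q: "q \<in> carrier P2" "p = varX R \<otimes>\<^bsub>P2\<^esub> q" using kerY p by blast
    hence "b = w \<otimes>\<^bsub>BB\<^esub> (II +>\<^bsub>P2\<^esub> q)" using p multB XXc by (simp add: w_def)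
    thus ?thesis using cosB q by blast
  qed
  have pchiX: "pbX (?\<chi> c) = UPm Q (\<phi> c) 0" for c
    unfolding chi_eq pbX_cos[OF constc[OF phic]] by (rule piX_const[OF phic])
  have pchiY: "pbY (?\<chi> c) = UPm Q (\<phi> c) 0" for c
    unfolding chi_eq pbY_cos[OF constc[OF phic]] by (rule piY_const[OF phic])
  have sXc: "\<And>f. f \<in> carrier Q \<Longrightarrow> II +>\<^bsub>P2\<^esub> sX f \<in> carrier BB" using cosB sX_c by blast
  have sYc: "\<And>f. f \<in> carrier Q \<Longrightarrow> II +>\<^bsub>P2\<^esub> sY f \<in> carrier BB" using cosB sY_c by blast
  have psX: "pbX (II +>\<^bsub>P2\<^esub> sX f) = f" if "f \<in> carrier Q" for f
    using pbX_cos[OF sX_c[OF that]] piX_sX[OF that] by simp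
  have psY: "pbY (II +>\<^bsub>P2\<^esub> sY f) = f" if "f \<in> carrier Q" for f
    using pbY_cos[OF sY_c[OF that]] piY_sY[OF that] by simp
  have DC: "D C \<in> carrier BB" by (rule deriv.D_cl[OF dD C])
  have hX: "pbX (D C) = \<zero>\<^bsub>Q\<^esub>"
    by (rule Q.hard_generic[OF phi rig cringB dD linD chic lndD pbX_hom pbY_hom sXc psX uc wc wu
          pu(1) pu(2) pu(3) pu(4) kerX' kerY' pchiX C])
  have hY: "pbY (D C) = \<zero>\<^bsub>Q\<^esub>"
    by (rule Q.hard_generic[OF phi rig cringB dD linD chic lndD pbY_hom pbX_hom sYc psY wc uc uw
          pu(3) pu(4) pu(1) pu(2) kerY' kerX' pchiY C])
  obtain p where p: "p \<in> carrier P2" "D C = II +>\<^bsub>P2\<^esub> p" using casesB[OF DC] by blast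
  have "p \<in> II" using joint[OF p(1)] hX hY p(2) pbX_cos[OF p(1)] pbY_cos[OF p(1)] by simp
  thus "D C = \<zero>\<^bsub>BB\<^esub>" using p cos_zero_iff[OF p(1)] by simp
qed

end



context UP_cring
begin

definition liftD :: "('a \<Rightarrow> 'a) \<Rightarrow> (nat \<Rightarrow> 'a) \<Rightarrow> nat \<Rightarrow> 'a" where
  "liftD D p = (\<lambda>n. D (UPc P p n))"

lemma liftD_closed:
  assumes dD: "deriv R D" and p: "p \<in> carrier P"
  shows "liftD D p \<in> carrier P"
proof -
  interpret D: deriv R D by (rule dD)
  obtain n where n: "bound \<zero> n p" using p carrier_P_up by auto
  have "bound \<zero> n (liftD D p)"
  proof
    fix m assume "n < m"
    hence "p m = \<zero>" using n unfolding bound_def by auto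
    thus "liftD D p m = \<zero>" using p by (simp add: liftD_def coeff_P_app)
  qed
  moreover have "liftD D p k \<in> carrier R" for k using p D.D_cl by (simp add: liftD_def)
  ultimately have "liftD D p \<in> up R" by (intro mem_upI) auto
  thus ?thesis by (simp add: carrier_P_up)
qed

lemma coeff_liftD: "deriv R D \<Longrightarrow> p \<in> carrier P \<Longrightarrow> UPc P (liftD D p) n = D (UPc P p n)"
  using liftD_closed by (simp add: coeff_P_app liftD_def)

lemma liftD_deriv:
  assumes dD: "deriv R D"
  shows "deriv P (liftD D)"
proof -
  interpret D: deriv R D by (rule dD)
  note lc = liftD_closed[OF dD] and cl = coeff_liftD[OF dD]
  show ?thesis
  proof
    fix a assume "a \<in> carrier P" thus "liftD D a \<in> carrier P" by (rule lc)
  next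
    fix a b assume a: "a \<in> carrier P" and b: "b \<in> carrier P"
    show "liftD D (a \<oplus>\<^bsub>P\<^esub> b) = liftD D a \<oplus>\<^bsub>P\<^esub> liftD D b"
      by (rule up_eqI) (use a b lc cl D.D_add in auto)
    show "liftD D (a \<otimes>\<^bsub>P\<^esub> b) = a \<otimes>\<^bsub>P\<^esub> liftD D b \<oplus>\<^bsub>P\<^esub> liftD D a \<otimes>\<^bsub>P\<^esub> b"
    proof (rule up_eqI)
      fix n
      have "UPc P (liftD D (a \<otimes>\<^bsub>P\<^esub> b)) n = D (\<Oplus>i\<in>{..n}. UPc P a i \<otimes> UPc P b (n - i))"
        using a b cl by simp
      also have "\<dots> = (\<Oplus>i\<in>{..n}. D (UPc P a i \<otimes> UPc P b (n - i)))"
        by (rule D.D_finsum) (use a b in auto)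
      also have "\<dots> = (\<Oplus>i\<in>{..n}. UPc P a i \<otimes> D (UPc P b (n - i)) \<oplus> D (UPc P a i) \<otimes> UPc P b (n - i))"
        by (rule R.finsum_cong) (use a b D.D_mult D.D_cl in auto)
      also have "\<dots> = (\<Oplus>i\<in>{..n}. UPc P a i \<otimes> D (UPc P b (n - i))) \<oplus> (\<Oplus>i\<in>{..n}. D (UPc P a i) \<otimes> UPc P b (n - i))"
        by (rule R.finsum_addf) (use a b D.D_cl in auto)
      also have "\<dots> = UPc P (a \<otimes>\<^bsub>P\<^esub> liftD D b \<oplus>\<^bsub>P\<^esub> liftD D a \<otimes>\<^bsub>P\<^esub> b) n"
        using a b lc cl by simp
      finally show "UPc P (liftD D (a \<otimes>\<^bsub>P\<^esub> b)) n = UPc P (a \<otimes>\<^bsub>P\<^esub> liftD D b \<oplus>\<^bsub>P\<^esub> liftD D a \<otimes>\<^bsub>P\<^esub> b) n" .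
    qed (use a b lc in auto)
  qed
qed

lemma liftD_lin:
  assumes dD: "deriv R D" and a: "a \<in> carrier R" and lin: "\<And>x. x \<in> carrier R \<Longrightarrow> D (a \<otimes> x) = a \<otimes> D x"
    and p: "p \<in> carrier P"
  shows "liftD D (UPm P a 0 \<otimes>\<^bsub>P\<^esub> p) = UPm P a 0 \<otimes>\<^bsub>P\<^esub> liftD D p"
proof -
  note lc = liftD_closed[OF dD] and cl = coeff_liftD[OF dD]
  show ?thesis unfolding monom_mult_is_smult[OF a p] monom_mult_is_smult[OF a lc[OF p]]
    by (rule up_eqI) (use a p lc cl lin in auto)
qed

lemma liftD_monom:
  assumes dD: "deriv R D" and a: "a \<in> carrier R"
  shows "liftD D (UPm P a n) = UPm P (D a) n"
proof -
  interpret D: deriv R D by (rule dD)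
  show ?thesis by (rule up_eqI) (use a liftD_closed[OF dD] coeff_liftD[OF dD] D.D_cl in auto)
qed

lemma liftD_pow:
  assumes dD: "deriv R D" and p: "p \<in> carrier P"
  shows "UPc P ((liftD D ^^ k) p) n = (D ^^ k) (UPc P p n)"
proof (induction k)
  case 0 show ?case by simp
next
  case (Suc k)
  interpret L: deriv P "liftD D" by (rule liftD_deriv[OF dD])
  show ?case using Suc coeff_liftD[OF dD L.Dpow_cl[OF p, of k]] by simp
qed

lemma liftD_lnd:
  assumes dD: "deriv R D" and lnd: "\<And>a. a \<in> carrier R \<Longrightarrow> \<exists>k. (D ^^ k) a = \<zero>" and p: "p \<in> carrier P"
  shows "\<exists>k. (liftD D ^^ k) p = \<zero>\<^bsub>P\<^esub>"
proof -
  interpret D: deriv R D by (rule dD)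
  interpret L: deriv P "liftD D" by (rule liftD_deriv[OF dD])
  obtain N where N: "bound \<zero> N p" using p carrier_P_up by auto
  define ki where "ki i = (SOME k. (D ^^ k) (UPc P p i) = \<zero>)" for i
  have ki: "(D ^^ ki i) (UPc P p i) = \<zero>" for i
    unfolding ki_def by (rule someI_ex) (use lnd p in auto)
  define K where "K = (\<Sum>i\<in>{..N}. ki i)"
  have "(liftD D ^^ K) p = \<zero>\<^bsub>P\<^esub>"
  proof (rule up_eqI)
    fix n
    have "(D ^^ K) (UPc P p n) = \<zero>"
    proof (cases "n \<le> N")
      case True
      hence "ki n \<le> K" unfolding K_def by (intro member_le_sum) auto
      thus ?thesis using ki[of n] D.Dpow_mono by blast
    next
      case False
      hence "p n = \<zero>" using N unfolding bound_def by auto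
      thus ?thesis using p by (simp add: coeff_P_app)
    qed
    thus "UPc P ((liftD D ^^ K) p) n = UPc P \<zero>\<^bsub>P\<^esub> n" using liftD_pow[OF dD p] by simp
  qed (use L.Dpow_cl p in auto)
  thus ?thesis by blast
qed

end



context XYc
begin

lemma easy_dir:
  assumes phi: "\<phi> \<in> ring_hom complex_ring R" and rigB: "rigid BB (XY_quot_hom R \<phi>)"
  shows "rigid R \<phi>"
  unfolding rigid_def
proof (intro allI impI ballI)
  fix \<delta> r assume lnd: "LND R \<phi> \<delta>" and r: "r \<in> carrier R"
  let ?\<chi> = "XY_quot_hom R \<phi>"
  have phic: "\<phi> c \<in> carrier R" for c by (rule phi_cl[OF phi])
  have chi_eq: "?\<chi> c = II +>\<^bsub>P2\<^esub> constXY R (\<phi> c)" for c by (simp add: XY_quot_hom_def polyXY_def)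
  interpret B: cring BB by (rule cringB)
  have d0: "deriv R \<delta>"
    using lnd Q.R.is_cring unfolding LND_def C_derivation_def by (unfold_locales) auto
  interpret d0: deriv R \<delta> by (rule d0)
  have lin0: "\<delta> (\<phi> c \<otimes> x) = \<phi> c \<otimes> \<delta> x" if "x \<in> carrier R" for c x
    using lnd that unfolding LND_def C_derivation_def by auto
  have lnd0: "\<exists>k. (\<delta> ^^ k) a = \<zero>" if "a \<in> carrier R" for a
    using lnd that unfolding LND_def by auto
  define D1 where "D1 = Q.liftD \<delta>"
  have d1: "deriv Q D1" unfolding D1_def by (rule Q.liftD_deriv[OF d0])
  interpret d1: deriv Q D1 by (rule d1)
  have lin1: "D1 (UPm Q (\<phi> c) 0 \<otimes>\<^bsub>Q\<^esub> f) = UPm Q (\<phi> c) 0 \<otimes>\<^bsub>Q\<^esub> D1 f" if "f \<in> carrier Q" for c f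
    unfolding D1_def by (rule Q.liftD_lin[OF d0 phic lin0 that])
  have lnd1: "\<exists>k. (D1 ^^ k) f = \<zero>\<^bsub>Q\<^esub>" if "f \<in> carrier Q" for f
    unfolding D1_def by (rule Q.liftD_lnd[OF d0 lnd0 that])
  define D2 where "D2 = P2.liftD D1"
  have d2: "deriv P2 D2" unfolding D2_def by (rule P2.liftD_deriv[OF d1])
  interpret d2: deriv P2 D2 by (rule d2)
  have lin2: "D2 (constXY R (\<phi> c) \<otimes>\<^bsub>P2\<^esub> p) = constXY R (\<phi> c) \<otimes>\<^bsub>P2\<^esub> D2 p" if "p \<in> carrier P2" for c p
    unfolding D2_def constXY_def by (rule P2.liftD_lin[OF d1 _ lin1 that]) (use phic in simp)
  have lnd2: "\<exists>k. (D2 ^^ k) p = \<zero>\<^bsub>P2\<^esub>" if "p \<in> carrier P2" for p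
    unfolding D2_def by (rule P2.liftD_lnd[OF d1 lnd1 that])
  have D2X: "D2 (varX R) = \<zero>\<^bsub>P2\<^esub>"
  proof -
    have "D1 (UPm Q \<one> 1) = UPm Q (\<delta> \<one>) 1" unfolding D1_def by (rule Q.liftD_monom[OF d0]) simp
    hence "D1 (UPm Q \<one> 1) = \<zero>\<^bsub>Q\<^esub>" by simp
    moreover have "D2 (varX R) = UPm P2 (D1 (UPm Q \<one> 1)) 0"
      unfolding D2_def varX_def by (rule P2.liftD_monom[OF d1]) simp
    ultimately show ?thesis by simp
  qed
  have D2Y: "D2 (varY R) = \<zero>\<^bsub>P2\<^esub>"
  proof -
    have "D2 (varY R) = UPm P2 (D1 \<one>\<^bsub>Q\<^esub>) 1"
      unfolding D2_def varY_def by (rule P2.liftD_monom[OF d1]) simp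
    thus ?thesis by simp
  qed
  have D2XY: "D2 (varX R \<otimes>\<^bsub>P2\<^esub> varY R) = \<zero>\<^bsub>P2\<^esub>"
    using d2.D_mult[OF XXc YYc] D2X D2Y XXc YYc by simp
  have D2I: "D2 x \<in> II" if x: "x \<in> II" for x
  proof -
    obtain y where y: "y \<in> carrier P2" "x = y \<otimes>\<^bsub>P2\<^esub> (varX R \<otimes>\<^bsub>P2\<^esub> varY R)" using x I_mem by blast
    have "D2 x = D2 y \<otimes>\<^bsub>P2\<^esub> (varX R \<otimes>\<^bsub>P2\<^esub> varY R)"
      using y d2.D_mult[of y "varX R \<otimes>\<^bsub>P2\<^esub> varY R"] D2XY XXc YYc d2.D_cl by simp
    thus ?thesis using I_mem d2.D_cl y by blast
  qed
  interpret I: ideal II P2 by (rule I_ideal)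
  define DB where "DB = qlift P2 II (\<lambda>p. II +>\<^bsub>P2\<^esub> D2 p)"
  have DBc: "DB (II +>\<^bsub>P2\<^esub> p) = II +>\<^bsub>P2\<^esub> D2 p" if p: "p \<in> carrier P2" for p
    unfolding DB_def
  proof (rule I.qlift_eq[OF _ p])
    fix p q assume p: "p \<in> carrier P2" and q: "q \<in> carrier P2" and pq: "p \<ominus>\<^bsub>P2\<^esub> q \<in> II"
    have "D2 p \<ominus>\<^bsub>P2\<^esub> D2 q \<in> II" using D2I[OF pq] d2.D_minus p q by simp
    thus "II +>\<^bsub>P2\<^esub> D2 p = II +>\<^bsub>P2\<^esub> D2 q" using I.coset_eq_iff d2.D_cl p q by simp
  qed
  have DBpow: "(DB ^^ n) (II +>\<^bsub>P2\<^esub> p) = II +>\<^bsub>P2\<^esub> (D2 ^^ n) p" if p: "p \<in> carrier P2" for n p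
  proof (induction n)
    case 0 show ?case by simp
  next
    case (Suc n) show ?case using Suc DBc[OF d2.Dpow_cl[OF p, of n]] by simp
  qed
  have lndB: "LND BB ?\<chi> DB"
    unfolding LND_def C_derivation_def
  proof (intro conjI ballI allI)
    show "DB \<in> carrier BB \<rightarrow> carrier BB"
    proof
      fix C assume "C \<in> carrier BB"
      then obtain p where p: "p \<in> carrier P2" "C = II +>\<^bsub>P2\<^esub> p" by (rule casesB)
      show "DB C \<in> carrier BB" using p DBc cosB d2.D_cl by simp
    qed
  next
    fix C1 C2 assume C1: "C1 \<in> carrier BB" and C2: "C2 \<in> carrier BB"
    obtain p where p: "p \<in> carrier P2" "C1 = II +>\<^bsub>P2\<^esub> p" using casesB[OF C1] by blast
    obtain q where q: "q \<in> carrier P2" "C2 = II +>\<^bsub>P2\<^esub> q" using casesB[OF C2] by blast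
    show "DB (C1 \<oplus>\<^bsub>BB\<^esub> C2) = DB C1 \<oplus>\<^bsub>BB\<^esub> DB C2"
      using p q addB DBc d2.D_add d2.D_cl by simp
    show "DB (C1 \<otimes>\<^bsub>BB\<^esub> C2) = C1 \<otimes>\<^bsub>BB\<^esub> DB C2 \<oplus>\<^bsub>BB\<^esub> DB C1 \<otimes>\<^bsub>BB\<^esub> C2"
      using p q addB multB DBc d2.D_mult d2.D_cl by simp
  next
    fix c C assume C: "C \<in> carrier BB"
    obtain p where p: "p \<in> carrier P2" "C = II +>\<^bsub>P2\<^esub> p" using casesB[OF C] by blast
    have cc: "constXY R (\<phi> c) \<in> carrier P2" using constc phic by simp
    show "DB (?\<chi> c \<otimes>\<^bsub>BB\<^esub> C) = ?\<chi> c \<otimes>\<^bsub>BB\<^esub> DB C"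
      using p cc chi_eq multB DBc lin2 d2.D_cl by simp
  next
    fix C assume C: "C \<in> carrier BB"
    obtain p where p: "p \<in> carrier P2" "C = II +>\<^bsub>P2\<^esub> p" using casesB[OF C] by blast
    obtain k where k: "(D2 ^^ k) p = \<zero>\<^bsub>P2\<^esub>" using lnd2 p by blast
    have "(DB ^^ k) C = II +>\<^bsub>P2\<^esub> \<zero>\<^bsub>P2\<^esub>" using DBpow p k by simp
    also have "\<dots> = \<zero>\<^bsub>BB\<^esub>" using cos_zero_iff additive_subgroup.zero_closed[OF ideal.axioms(1)[OF I_ideal]] by simp
    finally show "\<exists>n. (DB ^^ n) C = \<zero>\<^bsub>BB\<^esub>" by blast
  qed
  have rc: "constXY R r \<in> carrier P2" using constc r by simp
  have "DB (II +>\<^bsub>P2\<^esub> constXY R r) = \<zero>\<^bsub>BB\<^esub>"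
    using rigB lndB cosB[OF rc] unfolding rigid_def by blast
  hence "D2 (constXY R r) \<in> II" using DBc[OF rc] cos_zero_iff d2.D_cl[OF rc] by simp
  moreover have "D2 (constXY R r) = constXY R (\<delta> r)"
  proof -
    have "D1 (UPm Q r 0) = UPm Q (\<delta> r) 0" unfolding D1_def by (rule Q.liftD_monom[OF d0 r])
    moreover have "D2 (constXY R r) = UPm P2 (D1 (UPm Q r 0)) 0"
      unfolding D2_def constXY_def by (rule P2.liftD_monom[OF d1]) (use r in simp)
    ultimately show ?thesis by (simp add: constXY_def)
  qed
  ultimately have "piX (constXY R (\<delta> r)) = \<zero>\<^bsub>Q\<^esub>" using piX_I by simp
  hence "UPm Q (\<delta> r) 0 = \<zero>\<^bsub>Q\<^esub>" using piX_const d0.D_cl r by simp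
  hence "UPc Q (UPm Q (\<delta> r) 0) 0 = UPc Q \<zero>\<^bsub>Q\<^esub> 0" by simp
  thus "\<delta> r = \<zero>" using d0.D_cl r by simp
qed

end


theorem lemma2p4:
  fixes R :: "('a, 'b) ring_scheme" and \<phi> :: "complex \<Rightarrow> 'a"
  assumes "C_algebra R \<phi>"
    and "domain R"
    and "fin_gen_C_algebra R \<phi>"
  shows "rigid R \<phi> \<longleftrightarrow> rigid (XY_quot R) (XY_quot_hom R \<phi>)"
proof -
  interpret XYc R by (rule XYc.intro) (rule assms(2))
  have phi: "\<phi> \<in> ring_hom complex_ring R" using assms(1) unfolding C_algebra_def by simp
  show ?thesis using hard_dir[OF phi] easy_dir[OF phi] by blast
qed

end
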